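(* Let $f$ satisfy the standing assumptions below, and for $\xi,u_3\in(0,1)$ define $$G_0(\xi,u_3)=\frac{1}{4\sqrt2}\int_{-1}^{1}f'\!\left(\frac{1-\mu}{2}u_3+\frac{1+\mu}{2}\xi\right)\sqrt{1-\mu}\,d\mu,\qquad V_0(\xi,u_3)=\frac{4}{15}\xi+\frac25u_3 .$$ Then, for $u_3$ sufficiently close to $0$, the minimization problem $\min_{0<\xi<1}\left[-G_0(\xi,u_3)/V_0(\xi,u_3)\right]$ has one and only one critical point in $(0,1)$, and hence one and only one minimizing point. Furthermore, this critical point tends to $1$ as $u_3\to0$.
   Context: Standing assumptions: $f:(0,1)\to\mathbb{R}$ is the inverse of a smooth strictly decreasing function $u_0:\mathbb{R}\to(0,1)$ with $u_0(-\infty)=1$, $u_0(+\infty)=0$; thus $f$ is smooth with $f'<0$, $\lim_{u\to0}f(u)=+\infty$, $\lim_{u\to1}f(u)=-\infty$; moreover $f'''(u)<0$ for $u$ in a neighborhood of $0$ and in a neighborhood of $1$. *)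

theory Defs
  imports "HOL-Analysis.Analysis"
begin

definition smooth_on :: "real set \<Rightarrow> (real \<Rightarrow> real) \<Rightarrow> bool" where
  "smooth_on S g \<longleftrightarrow> (\<forall>n. \<forall>x\<in>S. ((deriv ^^ n) g) differentiable (at x))"

definition standing_f :: "(real \<Rightarrow> real) \<Rightarrow> bool" where
  "standing_f f \<longleftrightarrow>
     (\<exists>u0 :: real \<Rightarrow> real.
        smooth_on UNIV u0
      \<and> (\<forall>x y. x < y \<longrightarrow> u0 y < u0 x)
      \<and> (\<forall>x. u0 x \<in> {0<..<1})
      \<and> (u0 \<longlongrightarrow> 1) at_bot \<and> (u0 \<longlongrightarrow> 0) at_top
      \<and> (\<forall>x. f (u0 x) = x) \<and> (\<forall>u\<in>{0<..<1}. u0 (f u) = u))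
   \<and> smooth_on {0<..<1} f
   \<and> (\<forall>u\<in>{0<..<1}. deriv f u < 0)
   \<and> filterlim f at_top (at_right 0)
   \<and> filterlim f at_bot (at_left 1)
   \<and> (\<exists>d>0. \<forall>u\<in>{0<..<d}. (deriv ^^ 3) f u < 0)
   \<and> (\<exists>d>0. \<forall>u\<in>{1-d<..<1}. (deriv ^^ 3) f u < 0)"

definition G0 :: "(real \<Rightarrow> real) \<Rightarrow> real \<Rightarrow> real \<Rightarrow> real" where
  "G0 f \<xi> u3 = 1 / (4 * sqrt 2) *
     integral {-1..1} (\<lambda>\<mu>. deriv f ((1 - \<mu>) / 2 * u3 + (1 + \<mu>) / 2 * \<xi>) * sqrt (1 - \<mu>))"

definition V0 :: "real \<Rightarrow> real \<Rightarrow> real" where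
  "V0 \<xi> u3 = 4 / 15 * \<xi> + 2 / 5 * u3"

definition J0 :: "(real \<Rightarrow> real) \<Rightarrow> real \<Rightarrow> real \<Rightarrow> real" where
  "J0 f u3 \<xi> = - G0 f \<xi> u3 / V0 \<xi> u3"

end

theory Submission
  imports Defs
begin

definition aa :: "real \<Rightarrow> real \<Rightarrow> real \<Rightarrow> real" where
  "aa u \<xi> \<mu> = (1 - \<mu>) / 2 * u + (1 + \<mu>) / 2 * \<xi>"

definition Ik :: "(real \<Rightarrow> real) \<Rightarrow> nat \<Rightarrow> real \<Rightarrow> real \<Rightarrow> real" where
  "Ik g k u \<xi> = integral {-1..1} (\<lambda>\<mu>. g (aa u \<xi> \<mu>) * ((1 + \<mu>) / 2) ^ k * sqrt (1 - \<mu>))"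

lemma aa_bounds:
  assumes "\<mu> \<in> {-1..1}"
  shows "min u \<xi> \<le> aa u \<xi> \<mu> \<and> aa u \<xi> \<mu> \<le> max u \<xi>"
proof -
  define t where "t = (1 + \<mu>) / 2"
  have e: "aa u \<xi> \<mu> = u + t * (\<xi> - u)" unfolding aa_def t_def by (simp add: field_simps)
  have t0: "0 \<le> t" and t1: "t \<le> 1" using assms by (auto simp: t_def)
  show ?thesis
  proof (cases "u \<le> \<xi>")
    case True
    have "0 \<le> t * (\<xi> - u)" using t0 True by simp
    moreover have "t * (\<xi> - u) \<le> \<xi> - u" using t0 t1 True by (simp add: mult_left_le_one_le)
    ultimately show ?thesis using e True by auto
  next
    case False
    have "0 \<le> t * (u - \<xi>)" using t0 False by simp
    moreover have "t * (u - \<xi>) \<le> u - \<xi>" using t0 t1 False by (simp add: mult_left_le_one_le)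
    ultimately show ?thesis using e False by (auto simp: algebra_simps)
  qed
qed

lemma aa_in01:
  assumes "\<mu> \<in> {-1..1}" "u \<in> {0<..<1}" "\<xi> \<in> {0<..<1}"
  shows "aa u \<xi> \<mu> \<in> {0<..<1}"
  using aa_bounds[OF assms(1), of u \<xi>] assms(2,3) by auto

locale sf =
  fixes f :: "real \<Rightarrow> real"
  assumes sf: "standing_f f"
begin

abbreviation "f1 \<equiv> deriv f"
abbreviation "f2 \<equiv> deriv f1"
abbreviation "f3 \<equiv> deriv f2"

lemma smooth: "smooth_on {0<..<1} f" using sf unfolding standing_f_def by blast

lemma d0: "x \<in> {0<..<1} \<Longrightarrow> (f has_real_derivative f1 x) (at x)"
  using smooth unfolding smooth_on_def
  by (metis DERIV_deriv_iff_real_differentiable funpow_0)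

lemma d1: "x \<in> {0<..<1} \<Longrightarrow> (f1 has_real_derivative f2 x) (at x)"
  using smooth unfolding smooth_on_def
  by (metis DERIV_deriv_iff_real_differentiable funpow_0 funpow_Suc_right o_apply One_nat_def)

lemma d2: "x \<in> {0<..<1} \<Longrightarrow> (f2 has_real_derivative f3 x) (at x)"
proof -
  assume x: "x \<in> {0<..<1}"
  have "(deriv ^^ 2) f differentiable at x" using smooth x unfolding smooth_on_def by blast
  moreover have "(deriv ^^ 2) f = f2" by (simp add: numeral_2_eq_2)
  ultimately show ?thesis by (metis DERIV_deriv_iff_real_differentiable)
qed

lemma d3: "x \<in> {0<..<1} \<Longrightarrow> f3 differentiable at x"
proof -
  assume x: "x \<in> {0<..<1}"
  have "(deriv ^^ 3) f differentiable at x" using smooth x unfolding smooth_on_def by blast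
  moreover have "(deriv ^^ 3) f = f3" by (simp add: numeral_3_eq_3)
  ultimately show ?thesis by simp
qed

lemma cont_on_of_deriv:
  assumes "\<And>x. x \<in> {0<..<1::real} \<Longrightarrow> (g has_real_derivative g' x) (at x)"
  shows "continuous_on {0<..<1} g"
  using assms by (meson DERIV_continuous continuous_at_imp_continuous_on)

lemma c0: "continuous_on {0<..<1} f" using cont_on_of_deriv d0 by blast
lemma c1: "continuous_on {0<..<1} f1" using cont_on_of_deriv d1 by blast
lemma c2: "continuous_on {0<..<1} f2" using cont_on_of_deriv d2 by blast
lemma c3: "continuous_on {0<..<1} f3"
  using d3 by (meson continuous_at_imp_continuous_on differentiable_imp_continuous_within)

lemma f1neg: "x \<in> {0<..<1} \<Longrightarrow> f1 x < 0" using sf unfolding standing_f_def by blast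
lemma lim0: "filterlim f at_top (at_right 0)" using sf unfolding standing_f_def by blast
lemma lim1: "filterlim f at_bot (at_left 1)" using sf unfolding standing_f_def by blast
lemma f3_0: "\<exists>d>0. \<forall>u\<in>{0<..<d}. f3 u < 0"
  using sf unfolding standing_f_def by (simp add: numeral_3_eq_3)
lemma f3_1: "\<exists>d>0. \<forall>u\<in>{1-d<..<1}. f3 u < 0"
  using sf unfolding standing_f_def by (simp add: numeral_3_eq_3)

lemma Ik_deriv:
  assumes g: "\<And>x. x \<in> {0<..<1} \<Longrightarrow> (g has_real_derivative g' x) (at x)"
    and cg: "continuous_on {0<..<1} g'"
    and u: "u \<in> {0<..<1}" and \<xi>: "\<xi> \<in> {0<..<1}"
  shows "(Ik g k u has_real_derivative Ik g' (Suc k) u \<xi>) (at \<xi>)"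
proof -
  have cg0: "continuous_on {0<..<1} g" using cont_on_of_deriv g by blast
  have ca: "continuous_on S (\<lambda>(x, t). aa u x t)" for S
    unfolding aa_def split_beta by (intro continuous_intros) auto
  have img: "(\<lambda>(x, t). aa u x t) ` ({0<..<1} \<times> {-1..1}) \<subseteq> {0<..<1}"
    using aa_in01 u by auto
  have L: "((\<lambda>x. integral (cbox (-1) 1) (\<lambda>\<mu>. g (aa u x \<mu>) * ((1 + \<mu>) / 2) ^ k * sqrt (1 - \<mu>)))
      has_field_derivative integral (cbox (-1) 1) (\<lambda>\<mu>. g' (aa u \<xi> \<mu>) * ((1 + \<mu>) / 2) ^ Suc k * sqrt (1 - \<mu>)))
      (at \<xi> within {0<..<1})"
  proof (rule leibniz_rule_field_derivative)
    fix x t :: real assume x: "x \<in> {0<..<1}" and t: "t \<in> cbox (-1) 1"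
    have a01: "aa u x t \<in> {0<..<1}" using aa_in01 t x u by auto
    have da: "((\<lambda>x. aa u x t) has_real_derivative (1 + t) / 2) (at x)"
      unfolding aa_def by (auto intro!: derivative_eq_intros)
    have "((\<lambda>x. g (aa u x t)) has_real_derivative g' (aa u x t) * ((1 + t) / 2)) (at x)"
      using DERIV_chain2[OF g[OF a01] da] .
    then have "((\<lambda>x. g (aa u x t) * ((1 + t) / 2) ^ k * sqrt (1 - t)) has_real_derivative
        g' (aa u x t) * ((1 + t) / 2) * ((1 + t) / 2) ^ k * sqrt (1 - t)) (at x)"
      by (auto intro!: derivative_eq_intros)
    then show "((\<lambda>x. g (aa u x t) * ((1 + t) / 2) ^ k * sqrt (1 - t)) has_real_derivative
        g' (aa u x t) * ((1 + t) / 2) ^ Suc k * sqrt (1 - t)) (at x within {0<..<1})"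
      by (simp add: has_field_derivative_at_within mult.assoc mult.left_commute)
  next
    fix x :: real assume x: "x \<in> {0<..<1}"
    have "continuous_on {-1..1} (\<lambda>\<mu>. g (aa u x \<mu>))"
    proof (rule continuous_on_compose2[OF cg0])
      show "continuous_on {-1..1} (aa u x)" unfolding aa_def by (auto intro!: continuous_intros)
      show "aa u x ` {-1..1} \<subseteq> {0<..<1}" using aa_in01 x u by auto
    qed
    then have "continuous_on {-1..1} (\<lambda>\<mu>. g (aa u x \<mu>) * ((1 + \<mu>) / 2) ^ k * sqrt (1 - \<mu>))"
      by (auto intro!: continuous_intros)
    then show "(\<lambda>\<mu>. g (aa u x \<mu>) * ((1 + \<mu>) / 2) ^ k * sqrt (1 - \<mu>)) integrable_on cbox (-1) 1"
      by (simp add: integrable_continuous_interval)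
  next
    have "continuous_on ({0<..<1} \<times> {-1..1}) (\<lambda>z. g' ((\<lambda>(x, t). aa u x t) z))"
      using continuous_on_compose2[OF cg ca img] .
    then have "continuous_on ({0<..<1} \<times> cbox (-1) 1) (\<lambda>z. g' (aa u (fst z) (snd z)))"
      by (simp add: split_beta)
    then show "continuous_on ({0<..<1} \<times> cbox (-1) 1)
        (\<lambda>(x, t). g' (aa u x t) * ((1 + t) / 2) ^ Suc k * sqrt (1 - t))"
      by (auto simp: split_beta intro!: continuous_intros)
  qed (use \<xi> in auto)
  then show ?thesis
    unfolding Ik_def[abs_def] using at_within_open[OF \<xi>] by simp
qed

end

lemma sqrt_growth_bound:
  fixes g g' :: "real \<Rightarrow> real"
  assumes r: "r' < 1" "r \<le> r'"
    and d: "\<And>t. t \<in> {r..<1} \<Longrightarrow> (g has_real_derivative g' t) (at t)"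
    and lb: "\<And>t. t \<in> {r..<1} \<Longrightarrow> - K / sqrt (1 - t) \<le> g' t"
    and K: "0 \<le> K" "0 \<le> 1 - r'" "r' \<ge> 0"
    and t: "r' \<le> t" "t < 1"
  shows "g r' - 2 * K \<le> g t"
proof -
  define \<phi> where "\<phi> x = g x - 2 * K * sqrt (1 - x)" for x
  have "\<phi> r' \<le> \<phi> t"
  proof (rule DERIV_nonneg_imp_nondecreasing[OF t(1)])
    fix x assume x: "r' \<le> x" "x \<le> t"
    then have x1: "x < 1" "x \<in> {r..<1}" using t r by auto
    have "(\<phi> has_real_derivative g' x - 2 * K * (inverse (sqrt (1 - x)) / 2 * (0 - 1))) (at x)"
      unfolding \<phi>_def using x1
      by (auto intro!: derivative_eq_intros d)
    moreover have "g' x - 2 * K * (inverse (sqrt (1 - x)) / 2 * (0 - 1)) = g' x + K / sqrt (1 - x)"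
      by (simp add: field_simps)
    moreover have "0 \<le> g' x + K / sqrt (1 - x)" using lb[OF x1(2)] by simp
    ultimately show "\<exists>y. (\<phi> has_real_derivative y) (at x) \<and> 0 \<le> y" by metis
  qed
  then have "g r' - 2 * K * sqrt (1 - r') \<le> g t - 2 * K * sqrt (1 - t)" unfolding \<phi>_def .
  moreover have "sqrt (1 - r') \<le> 1" using K by simp
  moreover have "0 \<le> sqrt (1 - t)" using t by simp
  moreover have "2 * K * sqrt (1 - r') \<le> 2 * K" using K \<open>sqrt (1 - r') \<le> 1\<close>
    by (simp add: mult_left_le)
  moreover have "0 \<le> 2 * K * sqrt (1 - t)" using K t by simp
  ultimately show ?thesis by linarith
qed


lemma aa_alt: "aa u \<xi> \<mu> = u + (1 + \<mu>) / 2 * (\<xi> - u)"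
  unfolding aa_def by (simp add: field_simps)

lemma aa_mu: "\<xi> \<noteq> u \<Longrightarrow> aa u \<xi> (2 * (v - u) / (\<xi> - u) - 1) = v"
  unfolding aa_alt by (simp add: field_simps)

lemma aa_mono: "u \<le> \<xi> \<Longrightarrow> \<mu>1 \<le> \<mu>2 \<Longrightarrow> aa u \<xi> \<mu>1 \<le> aa u \<xi> \<mu>2"
  unfolding aa_alt by (intro add_left_mono mult_right_mono) auto

lemma aa_m1: "aa u \<xi> (-1) = u" unfolding aa_def by simp

lemma cont_comp_aa:
  assumes "continuous_on {0<..<1} g" "u \<in> {0<..<1}" "\<xi> \<in> {0<..<1}"
  shows "continuous_on {-1..1} (\<lambda>\<mu>. g (aa u \<xi> \<mu>))"
proof (rule continuous_on_compose2[OF assms(1)])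
  show "continuous_on {-1..1} (aa u \<xi>)" unfolding aa_def by (auto intro!: continuous_intros)
  show "aa u \<xi> ` {-1..1} \<subseteq> {0<..<1}" using aa_in01 assms by auto
qed

lemma integrable_F:
  assumes "continuous_on {0<..<1} g" "u \<in> {0<..<1}" "\<xi> \<in> {0<..<1}" "-1 \<le> a" "b \<le> 1"
  shows "(\<lambda>\<mu>. g (aa u \<xi> \<mu>) * ((1 + \<mu>) / 2) ^ k * sqrt (1 - \<mu>)) integrable_on {a..b}"
proof -
  have "continuous_on {-1..1} (\<lambda>\<mu>. g (aa u \<xi> \<mu>) * ((1 + \<mu>) / 2) ^ k * sqrt (1 - \<mu>))"
    using cont_comp_aa[OF assms(1-3)] by (auto intro!: continuous_intros)
  then have "continuous_on {a..b} (\<lambda>\<mu>. g (aa u \<xi> \<mu>) * ((1 + \<mu>) / 2) ^ k * sqrt (1 - \<mu>))"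
    by (rule continuous_on_subset) (use assms in auto)
  then show ?thesis by (rule integrable_continuous_interval)
qed

lemma integrable_G:
  fixes g :: "real \<Rightarrow> real"
  assumes "continuous_on {0<..<1} g" "u \<in> {0<..<1}" "\<xi> \<in> {0<..<1}" "-1 \<le> a" "b \<le> 1"
  shows "(\<lambda>\<mu>. g (aa u \<xi> \<mu>)) integrable_on {a..b}"
proof -
  have "continuous_on {a..b} (\<lambda>\<mu>. g (aa u \<xi> \<mu>))"
    by (rule continuous_on_subset[OF cont_comp_aa[OF assms(1-3)]]) (use assms in auto)
  then show ?thesis by (simp add: integrable_continuous_interval)
qed

lemma ftc_aa:
  assumes dG: "\<And>x. x \<in> {0<..<1} \<Longrightarrow> (G has_real_derivative g x) (at x)"
    and u: "u \<in> {0<..<1}" and \<xi>: "\<xi> \<in> {0<..<1}" and ne: "u \<noteq> \<xi>"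
    and m: "-1 \<le> m1" "m1 \<le> m2" "m2 \<le> 1"
  shows "integral {m1..m2} (\<lambda>\<mu>. g (aa u \<xi> \<mu>)) = 2 / (\<xi> - u) * (G (aa u \<xi> m2) - G (aa u \<xi> m1))"
proof -
  have "((\<lambda>\<mu>. g (aa u \<xi> \<mu>)) has_integral
      (2 / (\<xi> - u) * G (aa u \<xi> m2) - 2 / (\<xi> - u) * G (aa u \<xi> m1))) {m1..m2}"
  proof (rule fundamental_theorem_of_calculus[OF m(2)])
    fix x assume x: "x \<in> {m1..m2}"
    have a01: "aa u \<xi> x \<in> {0<..<1}" using aa_in01 x m u \<xi> by auto
    have da: "(aa u \<xi> has_real_derivative (\<xi> - u) / 2) (at x)"
      unfolding aa_def by (auto intro!: derivative_eq_intros simp: field_simps)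
    have "((\<lambda>\<mu>. G (aa u \<xi> \<mu>)) has_real_derivative g (aa u \<xi> x) * ((\<xi> - u) / 2)) (at x)"
      using DERIV_chain2[OF dG[OF a01] da] .
    then have "((\<lambda>\<mu>. 2 / (\<xi> - u) * G (aa u \<xi> \<mu>)) has_real_derivative
        2 / (\<xi> - u) * (g (aa u \<xi> x) * ((\<xi> - u) / 2))) (at x)"
      by (rule DERIV_cmult)
    moreover have "2 / (\<xi> - u) * (g (aa u \<xi> x) * ((\<xi> - u) / 2)) = g (aa u \<xi> x)"
      using ne by (simp add: field_simps)
    ultimately show "((\<lambda>\<mu>. 2 / (\<xi> - u) * G (aa u \<xi> \<mu>)) has_vector_derivative g (aa u \<xi> x))
        (at x within {m1..m2})"
      by (simp add: has_real_derivative_iff_has_vector_derivative[symmetric] has_field_derivative_at_within)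
  qed
  then show ?thesis by (simp add: integral_unique right_diff_distrib)
qed

lemma split3:
  fixes F :: "real \<Rightarrow> real"
  assumes "F integrable_on {-1..1}" "-1 \<le> m1" "m1 \<le> m2" "m2 \<le> 1"
  shows "integral {-1..1} F = integral {-1..m1} F + integral {m1..m2} F + integral {m2..1} F"
proof -
  have i2: "F integrable_on {m1..1}" using integrable_subinterval_real[OF assms(1)] assms by auto
  have "integral {-1..1} F = integral {-1..m1} F + integral {m1..1} F"
    using Henstock_Kurzweil_Integration.integral_combine[OF assms(2) _ assms(1)] assms by auto
  moreover have "integral {m1..1} F = integral {m1..m2} F + integral {m2..1} F"
    using Henstock_Kurzweil_Integration.integral_combine[OF assms(3,4) i2] by auto
  ultimately show ?thesis by simp
qed

lemma integral_le_const:
  fixes F :: "real \<Rightarrow> real"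
  assumes "F integrable_on {a..b}" "a \<le> b" "\<And>x. x \<in> {a..b} \<Longrightarrow> F x \<le> C"
  shows "integral {a..b} F \<le> (b - a) * C"
proof -
  have "integral {a..b} F \<le> integral {a..b} (\<lambda>x. C)"
    by (rule integral_le[OF assms(1)]) (use assms in auto)
  then show ?thesis using assms(2) by simp
qed

lemma integral_ge_const:
  fixes F :: "real \<Rightarrow> real"
  assumes "F integrable_on {a..b}" "a \<le> b" "\<And>x. x \<in> {a..b} \<Longrightarrow> C \<le> F x"
  shows "(b - a) * C \<le> integral {a..b} F"
proof -
  have "integral {a..b} (\<lambda>x. C) \<le> integral {a..b} F"
    by (rule integral_le[OF _ assms(1)]) (use assms in auto)
  then show ?thesis using assms(2) by simp
qed


lemma mul_le_2M: "(g::real) \<le> M \<Longrightarrow> 0 \<le> M \<Longrightarrow> 0 \<le> W \<Longrightarrow> W \<le> 2 \<Longrightarrow> g * W \<le> 2 * M"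
proof (cases "g \<le> 0")
  case True
  assume "0 \<le> M" "0 \<le> W"
  then show ?thesis using True by (smt (verit) mult_nonpos_nonneg)
next
  case False
  assume "g \<le> M" "0 \<le> M" "0 \<le> W" "W \<le> 2"
  then have "g * W \<le> M * 2" using False by (intro mult_mono) auto
  then show ?thesis by simp
qed

lemma pk_bounds: "0 \<le> (p::real) \<Longrightarrow> p \<le> 1 \<Longrightarrow> 0 \<le> p ^ k \<and> p ^ k \<le> 1"
  by (simp add: power_le_one)

lemma pk_quarter:
  assumes "1/2 \<le> (p::real)" "p \<le> 1" "1 \<le> k" "k \<le> 2"
  shows "1/4 \<le> p ^ k"
proof -
  have "k = 1 \<or> k = 2" using assms(3,4) by auto
  moreover have "1/4 \<le> p ^ 2"
  proof -
    have "(1/2) ^ 2 \<le> p ^ 2" using assms(1) by (intro power_mono) auto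
    then show ?thesis by (simp add: power2_eq_square)
  qed
  ultimately show ?thesis using assms(1) by auto
qed

lemma sqrt_le2: "-1 \<le> (\<mu>::real) \<Longrightarrow> sqrt (1 - \<mu>) \<le> 2"
proof -
  assume "-1 \<le> \<mu>"
  then have "sqrt (1 - \<mu>) \<le> sqrt 4" by (intro real_sqrt_le_mono) auto
  then show ?thesis by simp
qed

lemma upper_tail:
  fixes g G :: "real \<Rightarrow> real"
  assumes dG: "\<And>x. x \<in> {0<..<1} \<Longrightarrow> (G has_real_derivative g x) (at x)"
    and cg: "continuous_on {0<..<1} g"
    and u: "0 < u" "u \<le> 1/4" and e: "0 < e" "e \<le> 1/8"
    and t: "1 - e < t" "t < \<xi>" "\<xi> < 1" "1 - t \<le> 2 * (\<xi> - t)"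
    and M: "0 \<le> M" "\<And>a. a \<in> {u..1-e} \<Longrightarrow> g a \<le> M"
    and neg: "\<And>a. a \<in> {1-e..<1} \<Longrightarrow> g a \<le> 0"
    and k: "1 \<le> k" "k \<le> 2"
  shows "Ik g k u \<xi> \<le> 4 * M + 1/4 * (sqrt (1 - t) * (G t - G (1 - e)))"
proof -
  define s where "s = \<xi> - u"
  have s: "0 < s" "s \<le> 1" using u t e by (auto simp: s_def)
  define m1 where "m1 = 2 * ((1 - e) - u) / s - 1"
  define mt where "mt = 2 * (t - u) / s - 1"
  have u01: "u \<in> {0<..<1}" and \<xi>01: "\<xi> \<in> {0<..<1}" using u t e by auto
  have ne: "\<xi> \<noteq> u" using s s_def by auto
  have am1: "aa u \<xi> m1 = 1 - e" unfolding m1_def s_def by (rule aa_mu[OF ne])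
  have amt: "aa u \<xi> mt = t" unfolding mt_def s_def by (rule aa_mu[OF ne])
  have m1ge: "-1 \<le> m1" unfolding m1_def using s u e by simp
  have m1mt: "m1 \<le> mt" unfolding m1_def mt_def using s t by (simp add: divide_right_mono)
  have mtle: "mt \<le> 1"
  proof -
    have "2 * (t - u) / s \<le> 2 * s / s" using s t unfolding s_def by (intro divide_right_mono) auto
    then show ?thesis unfolding mt_def using s by simp
  qed
  have p1: "1/2 \<le> (1 + m1) / 2"
  proof -
    have x0: "0 \<le> 1 - e - u" using u e by simp
    have "(1 + m1) / 2 = (1 - e - u) / s" unfolding m1_def using s by (simp add: field_simps)
    moreover have "1 - e - u \<le> (1 - e - u) / s" using s x0 by (simp add: le_divide_eq mult_left_le)
    ultimately show ?thesis using u e by linarith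
  qed
  have sq: "sqrt (1 - t) \<le> sqrt (1 - mt) * (2 / s)"
  proof -
    have "1 - mt = 2 * (\<xi> - t) / s" unfolding mt_def s_def using ne by (simp add: field_simps)
    moreover have "2 * (\<xi> - t) \<le> 2 * (\<xi> - t) / s" using s t by (simp add: le_divide_eq mult_left_le)
    ultimately have "1 - t \<le> 1 - mt" using t by simp
    then have "sqrt (1 - t) \<le> sqrt (1 - mt)" by simp
    moreover have "sqrt (1 - mt) \<le> sqrt (1 - mt) * (2 / s)"
      using s mtle by (intro mult_le_cancel_left1[THEN iffD2] disjI1) (auto simp: le_divide_eq)
    ultimately show ?thesis by linarith
  qed
  define F where "F \<mu> = g (aa u \<xi> \<mu>) * ((1 + \<mu>) / 2) ^ k * sqrt (1 - \<mu>)" for \<mu>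
  have Fint: "F integrable_on {a..b}" if "-1 \<le> a" "b \<le> 1" for a b
    unfolding F_def by (rule integrable_F[OF cg u01 \<xi>01 that])
  have Ik_split: "Ik g k u \<xi> = integral {-1..m1} F + integral {m1..mt} F + integral {mt..1} F"
    unfolding Ik_def F_def[symmetric] by (rule split3[OF Fint m1ge m1mt mtle]) auto
  have W: "0 \<le> ((1 + \<mu>) / 2) ^ k * sqrt (1 - \<mu>) \<and> ((1 + \<mu>) / 2) ^ k * sqrt (1 - \<mu>) \<le> 2"
    if "\<mu> \<in> {-1..1}" for \<mu>
  proof -
    have a: "0 \<le> ((1 + \<mu>) / 2) ^ k" "((1 + \<mu>) / 2) ^ k \<le> 1" using pk_bounds[of "(1 + \<mu>) / 2" k] that by auto
    have b: "0 \<le> sqrt (1 - \<mu>)" "sqrt (1 - \<mu>) \<le> 2" using that sqrt_le2 by auto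
    have "((1 + \<mu>) / 2) ^ k * sqrt (1 - \<mu>) \<le> 1 * 2" by (rule mult_mono[OF a(2) b(2)]) (use b in auto)
    moreover have "0 \<le> ((1 + \<mu>) / 2) ^ k * sqrt (1 - \<mu>)" by (rule mult_nonneg_nonneg[OF a(1) b(1)])
    ultimately show ?thesis by simp
  qed
  have part1: "integral {-1..m1} F \<le> 4 * M"
  proof -
    have "integral {-1..m1} F \<le> (m1 - -1) * (2 * M)"
    proof (rule integral_le_const[OF Fint m1ge])
      fix \<mu> assume \<mu>: "\<mu> \<in> {-1..m1}"
      have "aa u \<xi> \<mu> \<in> {u..1-e}"
        using aa_mono[of u \<xi> "-1" \<mu>] aa_mono[of u \<xi> \<mu> m1] \<mu> s am1 aa_m1 unfolding s_def by auto
      then have "g (aa u \<xi> \<mu>) \<le> M" by (rule M(2))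
      moreover have "\<mu> \<in> {-1..1}" using \<mu> m1mt mtle by auto
      ultimately show "F \<mu> \<le> 2 * M" unfolding F_def using W mul_le_2M M(1) by (simp add: mult.assoc)
    qed (use m1mt mtle in auto)
    moreover have "(m1 - -1) * (2 * M) \<le> 2 * (2 * M)" using m1mt mtle M(1) by (intro mult_right_mono) auto
    ultimately have "integral {-1..m1} F \<le> 2 * (2 * M)" by (rule order_trans)
    then show ?thesis by simp
  qed
  have part3: "integral {mt..1} F \<le> 0"
  proof -
    have "integral {mt..1} F \<le> (1 - mt) * 0"
    proof (rule integral_le_const)
      show "F integrable_on {mt..1}" by (rule Fint) (use m1ge m1mt in auto)
      show "mt \<le> 1" by (rule mtle)
    next
      fix \<mu> assume \<mu>: "\<mu> \<in> {mt..1}"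
      have "aa u \<xi> \<mu> \<in> {1-e..<1}"
        using aa_mono[of u \<xi> mt \<mu>] aa_bounds[of \<mu> u \<xi>] \<mu> s amt t m1ge m1mt unfolding s_def by auto
      then have "g (aa u \<xi> \<mu>) \<le> 0" by (rule neg)
      moreover have "\<mu> \<in> {-1..1}" using \<mu> m1mt m1ge by auto
      ultimately show "F \<mu> \<le> 0" unfolding F_def using W by (simp add: mult.assoc mult_nonpos_nonneg)
    qed
    then show ?thesis by simp
  qed
  have gint: "integral {m1..mt} (\<lambda>\<mu>. g (aa u \<xi> \<mu>)) = 2 / s * (G t - G (1 - e))"
    using ftc_aa[OF dG u01 \<xi>01 ne[symmetric] m1ge m1mt mtle] am1 amt unfolding s_def by simp
  have part2: "integral {m1..mt} F \<le> 1/4 * sqrt (1 - mt) * (2 / s * (G t - G (1 - e)))"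
  proof -
    have "integral {m1..mt} F \<le> integral {m1..mt} (\<lambda>\<mu>. 1/4 * sqrt (1 - mt) * g (aa u \<xi> \<mu>))"
    proof (rule integral_le[OF Fint])
      show "(\<lambda>\<mu>. 1/4 * sqrt (1 - mt) * g (aa u \<xi> \<mu>)) integrable_on {m1..mt}"
        using integrable_on_cmult_left[OF integrable_G[OF cg u01 \<xi>01 m1ge mtle], of "1/4 * sqrt (1 - mt)"] by simp
      fix \<mu> assume \<mu>: "\<mu> \<in> {m1..mt}"
      have "aa u \<xi> \<mu> \<in> {1-e..<1}"
        using aa_mono[of u \<xi> m1 \<mu>] aa_mono[of u \<xi> \<mu> mt] \<mu> s am1 amt t unfolding s_def by auto
      then have gneg: "g (aa u \<xi> \<mu>) \<le> 0" by (rule neg)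
      have pq: "1/4 \<le> ((1 + \<mu>) / 2) ^ k"
        by (rule pk_quarter[OF _ _ k]) (use p1 \<mu> mtle in auto)
      have sqm: "sqrt (1 - mt) \<le> sqrt (1 - \<mu>)" using \<mu> by simp
      have "1/4 * sqrt (1 - mt) \<le> ((1 + \<mu>) / 2) ^ k * sqrt (1 - \<mu>)"
        by (rule mult_mono[OF pq sqm]) (use \<mu> mtle m1ge pk_bounds[of "(1 + \<mu>) / 2" k] in auto)
      then have "g (aa u \<xi> \<mu>) * (((1 + \<mu>) / 2) ^ k * sqrt (1 - \<mu>)) \<le> g (aa u \<xi> \<mu>) * (1/4 * sqrt (1 - mt))"
        using gneg by (rule mult_left_mono_neg)
      then show "F \<mu> \<le> 1/4 * sqrt (1 - mt) * g (aa u \<xi> \<mu>)" unfolding F_def by (simp add: mult_ac)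
    qed (use m1mt m1ge mtle in auto)
    also have "\<dots> = 1/4 * sqrt (1 - mt) * integral {m1..mt} (\<lambda>\<mu>. g (aa u \<xi> \<mu>))"
      by simp
    finally show ?thesis using gint by simp
  qed
  have Dneg: "G t - G (1 - e) \<le> 0"
  proof -
    have "integral {m1..mt} (\<lambda>\<mu>. g (aa u \<xi> \<mu>)) \<le> (mt - m1) * 0"
    proof (rule integral_le_const[OF integrable_G[OF cg u01 \<xi>01 m1ge mtle] m1mt])
      fix \<mu> assume \<mu>: "\<mu> \<in> {m1..mt}"
      have "aa u \<xi> \<mu> \<in> {1-e..<1}"
        using aa_mono[of u \<xi> m1 \<mu>] aa_mono[of u \<xi> \<mu> mt] \<mu> s am1 amt t unfolding s_def by auto
      then show "g (aa u \<xi> \<mu>) \<le> 0" by (rule neg)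
    qed
    then have "2 / s * (G t - G (1 - e)) \<le> 0" using gint by simp
    moreover have "0 < 2 / s" using s by simp
    ultimately show ?thesis using mult_le_0_iff[of "2 / s" "G t - G (1 - e)"] by linarith
  qed
  have "sqrt (1 - mt) * (2 / s) * (G t - G (1 - e)) \<le> sqrt (1 - t) * (G t - G (1 - e))"
    using sq Dneg by (rule mult_right_mono_neg)
  then have "1/4 * (sqrt (1 - mt) * (2 / s) * (G t - G (1 - e))) \<le> 1/4 * (sqrt (1 - t) * (G t - G (1 - e)))"
    by (rule mult_left_mono) simp
  moreover have "1/4 * sqrt (1 - mt) * (2 / s * (G t - G (1 - e))) = 1/4 * (sqrt (1 - mt) * (2 / s) * (G t - G (1 - e)))"
    by (simp only: mult.assoc)
  ultimately have "1/4 * sqrt (1 - mt) * (2 / s * (G t - G (1 - e))) \<le> 1/4 * (sqrt (1 - t) * (G t - G (1 - e)))"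
    by linarith
  then show ?thesis using Ik_split part1 part2 part3 by linarith
qed

context sf
begin

lemma f_not_bdd_below_near1:
  assumes "0 < r" "r < 1"
  shows "\<not> (\<forall>t\<in>{r..<1}. B \<le> f t)"
proof
  assume H: "\<forall>t\<in>{r..<1}. B \<le> f t"
  have "eventually (\<lambda>t. f t \<le> B - 1) (at_left 1)" using lim1 by (simp add: filterlim_at_bot)
  moreover have "eventually (\<lambda>t. t \<in> {r<..<1}) (at_left (1::real))" using eventually_at_left_real assms by auto
  ultimately have "eventually (\<lambda>t. f t \<le> B - 1 \<and> t \<in> {r<..<1}) (at_left (1::real))"
    by (rule eventually_conj)
  then have "\<exists>t. f t \<le> B - 1 \<and> t \<in> {r<..<1}"
    using eventually_happens trivial_limit_at_left_real by blast
  then obtain t where "f t \<le> B - 1" "t \<in> {r<..<1}" by blast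
  then have "B \<le> f t" using H by auto
  with \<open>f t \<le> B - 1\<close> show False by linarith
qed

lemma f1_not_bdd_below_near1:
  assumes "0 < r" "r < 1"
  shows "\<not> (\<forall>t\<in>{r..<1}. - K / sqrt (1 - t) \<le> f1 t)"
proof
  assume H: "\<forall>t\<in>{r..<1}. - K / sqrt (1 - t) \<le> f1 t"
  define K' where "K' = max K 0"
  have H': "- K' / sqrt (1 - t) \<le> f1 t" if "t \<in> {r..<1}" for t
  proof -
    have "- K' / sqrt (1 - t) \<le> - K / sqrt (1 - t)" using that unfolding K'_def
      by (simp add: divide_right_mono)
    moreover have "- (K / sqrt (1 - t)) \<le> f1 t" using H that by auto
    ultimately show ?thesis by linarith
  qed
  have "\<forall>t\<in>{r..<1}. f r - 2 * K' \<le> f t"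
  proof
    fix t assume t: "t \<in> {r..<1}"
    show "f r - 2 * K' \<le> f t"
      by (rule sqrt_growth_bound[of r r f f1 K']) (use assms t H' d0 in \<open>auto simp: K'_def\<close>)
  qed
  then show False using f_not_bdd_below_near1[OF assms] by blast
qed

lemma f2_not_bdd_below_near1:
  assumes "0 < r" "r < 1"
  shows "\<not> (\<forall>t\<in>{r..<1}. - K / sqrt (1 - t) \<le> f2 t)"
proof
  assume H: "\<forall>t\<in>{r..<1}. - K / sqrt (1 - t) \<le> f2 t"
  define K' where "K' = max K 0"
  have H': "- K' / sqrt (1 - t) \<le> f2 t" if "t \<in> {r..<1}" for t
  proof -
    have "- K' / sqrt (1 - t) \<le> - K / sqrt (1 - t)" using that unfolding K'_def
      by (simp add: divide_right_mono)
    moreover have "- (K / sqrt (1 - t)) \<le> f2 t" using H that by auto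
    ultimately show ?thesis by linarith
  qed
  have lb: "f1 r - 2 * K' \<le> f1 t" if t: "t \<in> {r..<1}" for t
    by (rule sqrt_growth_bound[of r r f1 f2 K']) (use assms t H' d1 in \<open>auto simp: K'_def\<close>)
  define B where "B = max 0 (2 * K' - f1 r)"
  have "- B / sqrt (1 - t) \<le> f1 t" if t: "t \<in> {r..<1}" for t
  proof -
    have s: "0 < sqrt (1 - t)" "sqrt (1 - t) \<le> 1" using t assms by auto
    have B0: "0 \<le> B" unfolding B_def by simp
    have "B * sqrt (1 - t) \<le> B" using mult_left_mono[OF s(2) B0] by simp
    then have "B \<le> B / sqrt (1 - t)" using s(1) by (simp add: le_divide_eq)
    then show ?thesis using lb[OF t] unfolding B_def by linarith
  qed
  then show False using f1_not_bdd_below_near1[OF assms] by blast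
qed

lemma tail_f1:
  assumes "r < 1"
  shows "\<exists>t. max r 0 < t \<and> t < 1 \<and> K \<le> sqrt (1 - t) * (- f1 t)"
proof (rule ccontr)
  assume N: "\<not> ?thesis"
  define r' where "r' = (max r 0 + 1) / 2"
  have r': "0 < r'" "r' < 1" "max r 0 < r'" using assms by (auto simp: r'_def)
  have "- K / sqrt (1 - t) \<le> f1 t" if t: "t \<in> {r'..<1}" for t
  proof -
    have "sqrt (1 - t) * (- f1 t) < K" using N t r' by force
    moreover have "0 < sqrt (1 - t)" using t by auto
    ultimately show ?thesis by (simp add: field_simps)
  qed
  then show False using f1_not_bdd_below_near1[OF r'(1,2)] by blast
qed

lemma tail_f2:
  assumes "r < 1"
  shows "\<exists>t. max r 0 < t \<and> t < 1 \<and> K \<le> sqrt (1 - t) * (- f2 t)"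
proof (rule ccontr)
  assume N: "\<not> ?thesis"
  define r' where "r' = (max r 0 + 1) / 2"
  have r': "0 < r'" "r' < 1" "max r 0 < r'" using assms by (auto simp: r'_def)
  have "- K / sqrt (1 - t) \<le> f2 t" if t: "t \<in> {r'..<1}" for t
  proof -
    have "sqrt (1 - t) * (- f2 t) < K" using N t r' by force
    moreover have "0 < sqrt (1 - t)" using t by auto
    ultimately show ?thesis by (simp add: field_simps)
  qed
  then show False using f2_not_bdd_below_near1[OF r'(1,2)] by blast
qed

end

lemma cont_bound:
  fixes g :: "real \<Rightarrow> real"
  assumes "continuous_on {a..b} g"
  shows "\<exists>M\<ge>0. \<forall>x\<in>{a..b}. \<bar>g x\<bar> \<le> M"
proof -
  have "bounded (g ` {a..b})" using compact_imp_bounded[OF compact_continuous_image[OF assms]] by simp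
  then obtain M where "\<forall>y\<in>g ` {a..b}. norm y \<le> M" by (auto simp: bounded_iff)
  then show ?thesis by (intro exI[of _ "max M 0"]) auto
qed

context sf
begin

lemma near0_f1:
  assumes "0 < d"
  shows "\<exists>x. 0 < x \<and> x < d \<and> x < 1 \<and> f1 x < - B"
proof (rule ccontr)
  assume N: "\<not> ?thesis"
  define y where "y = min d (1/2) / 2"
  have y: "0 < y" "y < d" "y < 1/2" using assms by (auto simp: y_def)
  have ub: "f x \<le> f y + \<bar>B\<bar>" if x: "0 < x" "x \<le> y" for x
  proof -
    have "f x + B * x \<le> f y + B * y"
    proof (rule DERIV_nonneg_imp_nondecreasing[OF x(2)])
      fix z assume z: "x \<le> z" "z \<le> y"
      have z01: "z \<in> {0<..<1}" using z x y by auto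
      have "((\<lambda>t. f t + B * t) has_real_derivative f1 z + B) (at z)"
        by (auto intro!: derivative_eq_intros d0[OF z01])
      moreover have "f1 z \<ge> - B"
      proof -
        have "0 < z" "z < d" "z < 1" using z x y by auto
        then show ?thesis using N by force
      qed
      ultimately show "\<exists>l. ((\<lambda>t. f t + B * t) has_real_derivative l) (at z) \<and> 0 \<le> l"
        by (intro exI[of _ "f1 z + B"]) auto
    qed
    moreover have "B * y - B * x \<le> \<bar>B\<bar>"
    proof -
      have "B * y - B * x = B * (y - x)" by (simp add: algebra_simps)
      also have "\<dots> \<le> \<bar>B\<bar> * (y - x)" using x by (intro mult_right_mono) auto
      also have "\<dots> \<le> \<bar>B\<bar> * 1" using x y by (intro mult_left_mono) auto
      finally show ?thesis by simp
    qed
    ultimately show ?thesis by linarith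
  qed
  have "eventually (\<lambda>x. f y + \<bar>B\<bar> + 1 \<le> f x) (at_right 0)" using lim0 by (simp add: filterlim_at_top)
  moreover have "eventually (\<lambda>x. x \<in> {0<..<y}) (at_right (0::real))" using eventually_at_right_real y by auto
  ultimately have "eventually (\<lambda>x. f y + \<bar>B\<bar> + 1 \<le> f x \<and> x \<in> {0<..<y}) (at_right (0::real))"
    by (rule eventually_conj)
  then have "\<exists>x. f y + \<bar>B\<bar> + 1 \<le> f x \<and> x \<in> {0<..<y}"
    using eventually_happens trivial_limit_at_right_real by blast
  then obtain x where "f y + \<bar>B\<bar> + 1 \<le> f x" "x \<in> {0<..<y}" by blast
  with ub[of x] show False by auto
qed

lemma f2pos: "\<exists>d1>0. d1 < 1 \<and> (\<forall>x\<in>{0<..d1}. 0 < f2 x)"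
proof -
  obtain d3 where d3: "d3 > 0" "\<forall>u\<in>{0<..<d3}. f3 u < 0" using f3_0 by blast
  define D where "D = min d3 (1/2)"
  have D: "0 < D" "D \<le> d3" "D \<le> 1/2" using d3 by (auto simp: D_def)
  show ?thesis
  proof (cases "\<exists>x0\<in>{0<..<D}. 0 < f2 x0")
    case True
    then obtain x0 where x0: "x0 \<in> {0<..<D}" "0 < f2 x0" by blast
    have "0 < f2 x" if x: "x \<in> {0<..x0}" for x
    proof -
      have "f2 x0 \<le> f2 x"
      proof (rule DERIV_nonpos_imp_nonincreasing[of x x0 f2])
        show "x \<le> x0" using x by auto
        fix z assume z: "x \<le> z" "z \<le> x0"
        have z01: "z \<in> {0<..<1}" using z x x0 D by auto
        have "f3 z < 0" using d3(2) z x x0 D by auto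
        then show "\<exists>y. (f2 has_real_derivative y) (at z) \<and> y \<le> 0"
          using d2[OF z01] by (intro exI[of _ "f3 z"]) auto
      qed
      then show ?thesis using x0 by linarith
    qed
    then show ?thesis using x0 D by (intro exI[of _ x0]) auto
  next
    case False
    have "f1 (D/2) \<le> f1 x" if x: "x \<in> {0<..D/2}" for x
    proof (rule DERIV_nonpos_imp_nonincreasing[of x "D/2" f1])
      show "x \<le> D/2" using x by auto
      fix z assume z: "x \<le> z" "z \<le> D/2"
      have z01: "z \<in> {0<..<1}" using z x D by auto
      have "\<not> 0 < f2 z" using False z x D by auto
      then show "\<exists>y. (f1 has_real_derivative y) (at z) \<and> y \<le> 0"
        using d1[OF z01] by (intro exI[of _ "f2 z"]) auto
    qed
    moreover obtain x where "0 < x" "x < D/2" "f1 x < - (- f1 (D/2))"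
      using near0_f1[of "D/2" "- f1 (D/2)"] D by auto
    ultimately show ?thesis by force
  qed
qed

lemma near1: "\<exists>e>0. e \<le> 1/8 \<and> (\<forall>x\<in>{1-2*e..<1}. f3 x < 0 \<and> f2 x < 0)"
proof -
  obtain d where d: "d > 0" "\<forall>u\<in>{1-d<..<1}. f3 u < 0" using f3_1 by blast
  obtain t where t: "max (1-d) 0 < t" "t < 1" "1 \<le> sqrt (1 - t) * (- f2 t)"
    using tail_f2[of "1-d" 1] d by auto
  have f2t: "f2 t < 0"
  proof (rule ccontr)
    assume "\<not> f2 t < 0"
    then have "sqrt (1 - t) * (- f2 t) \<le> 0" using t by (simp add: mult_nonneg_nonpos)
    then show False using t by linarith
  qed
  define e where "e = min (1/8) ((1-t)/2)"
  have "e \<le> (1-t)/2" unfolding e_def by (rule min.cobounded2)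
  then have e: "0 < e" "e \<le> 1/8" "t \<le> 1 - 2*e" using t by (auto simp: e_def)
  have "f3 x < 0 \<and> f2 x < 0" if x: "x \<in> {1-2*e..<1}" for x
  proof
    show "f3 x < 0" using d(2) x e t by auto
    have "f2 x \<le> f2 t"
    proof (rule DERIV_nonpos_imp_nonincreasing[of t x f2])
      show "t \<le> x" using x e by auto
      fix z assume z: "t \<le> z" "z \<le> x"
      have z01: "z \<in> {0<..<1}" using z x t by auto
      have "f3 z < 0" using d(2) z x t by auto
      then show "\<exists>y. (f2 has_real_derivative y) (at z) \<and> y \<le> 0"
        using d2[OF z01] by (intro exI[of _ "f3 z"]) auto
    qed
    then show "f2 x < 0" using f2t by linarith
  qed
  then show ?thesis using e by blast
qed

end

lemma mul_ge_m2M: "\<bar>g::real\<bar> \<le> M \<Longrightarrow> 0 \<le> W \<Longrightarrow> W \<le> 2 \<Longrightarrow> - (2 * M) \<le> g * W"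
proof -
  assume a: "\<bar>g\<bar> \<le> M" "0 \<le> W" "W \<le> 2"
  have "- g \<le> M" "0 \<le> M" using a by auto
  then have "(- g) * W \<le> 2 * M" using mul_le_2M a by blast
  then show ?thesis by simp
qed

lemma W_bounds:
  assumes "\<mu> \<in> {-1..1}"
  shows "0 \<le> ((1 + \<mu>) / 2) ^ k * sqrt (1 - \<mu>) \<and> ((1 + \<mu>) / 2) ^ k * sqrt (1 - \<mu>) \<le> 2"
proof -
  have a: "0 \<le> ((1 + \<mu>) / 2) ^ k" "((1 + \<mu>) / 2) ^ k \<le> 1" using pk_bounds[of "(1 + \<mu>) / 2" k] assms by auto
  have b: "0 \<le> sqrt (1 - \<mu>)" "sqrt (1 - \<mu>) \<le> 2" using assms sqrt_le2 by auto
  have "((1 + \<mu>) / 2) ^ k * sqrt (1 - \<mu>) \<le> 1 * 2" by (rule mult_mono[OF a(2) b(2)]) (use b in auto)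
  moreover have "0 \<le> ((1 + \<mu>) / 2) ^ k * sqrt (1 - \<mu>)" by (rule mult_nonneg_nonneg[OF a(1) b(1)])
  ultimately show ?thesis by simp
qed

context sf
begin

lemma regionB:
  assumes u: "0 < u" and v0: "u < v0" "v0 < \<xi>" "\<xi> < 1"
    and pos: "\<And>x. x \<in> {0<..v0} \<Longrightarrow> 0 < f2 x"
    and M: "0 \<le> M" "\<And>x. x \<in> {v0..\<xi>} \<Longrightarrow> \<bar>f2 x\<bar> \<le> M"
    and d: "0 < d" "d \<le> 2 * (\<xi> - v0)"
    and T: "0 \<le> T" "T \<le> f u - f v0 - \<bar>f1 v0\<bar>"
  shows "- 4 * M + sqrt d * (2 * T) \<le> Ik f2 1 u \<xi>"
proof -
  define s where "s = \<xi> - u"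
  have s: "0 < s" "s \<le> 1" using u v0 by (auto simp: s_def)
  have ne: "\<xi> \<noteq> u" using s s_def by auto
  have u01: "u \<in> {0<..<1}" and \<xi>01: "\<xi> \<in> {0<..<1}" using u v0 by auto
  define m0 where "m0 = 2 * (v0 - u) / s - 1"
  have am0: "aa u \<xi> m0 = v0" unfolding m0_def s_def by (rule aa_mu[OF ne])
  have m0ge: "-1 \<le> m0" unfolding m0_def using s v0 by simp
  have m0le: "m0 \<le> 1"
  proof -
    have "2 * (v0 - u) / s \<le> 2 * s / s" using s v0 unfolding s_def by (intro divide_right_mono) auto
    then show ?thesis unfolding m0_def using s by simp
  qed
  define F where "F \<mu> = f2 (aa u \<xi> \<mu>) * ((1 + \<mu>) / 2) ^ 1 * sqrt (1 - \<mu>)" for \<mu>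
  have Fint: "F integrable_on {a..b}" if "-1 \<le> a" "b \<le> 1" for a b
    unfolding F_def by (rule integrable_F[OF c2 u01 \<xi>01 that])
  have Ik_split: "Ik f2 1 u \<xi> = integral {-1..m0} F + integral {m0..1} F"
    unfolding Ik_def F_def[symmetric]
    using Henstock_Kurzweil_Integration.integral_combine[OF m0ge m0le Fint] by simp
  have part2: "- 4 * M \<le> integral {m0..1} F"
  proof -
    have "(1 - m0) * (- (2 * M)) \<le> integral {m0..1} F"
    proof (rule integral_ge_const)
      show "F integrable_on {m0..1}" by (rule Fint) (use m0ge in auto)
      show "m0 \<le> 1" by (rule m0le)
      fix \<mu> assume \<mu>: "\<mu> \<in> {m0..1}"
      have "aa u \<xi> \<mu> \<in> {v0..\<xi>}"
        using aa_mono[of u \<xi> m0 \<mu>] aa_bounds[of \<mu> u \<xi>] \<mu> s am0 m0ge unfolding s_def by auto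
      then have "\<bar>f2 (aa u \<xi> \<mu>)\<bar> \<le> M" by (rule M(2))
      moreover have "\<mu> \<in> {-1..1}" using \<mu> m0ge by auto
      ultimately have "- (2 * M) \<le> f2 (aa u \<xi> \<mu>) * (((1 + \<mu>) / 2) ^ 1 * sqrt (1 - \<mu>))"
        using W_bounds[of \<mu> 1] mul_ge_m2M by blast
      then show "- (2 * M) \<le> F \<mu>" unfolding F_def by (simp only: mult.assoc)
    qed
    moreover have "(1 - m0) * (- (2 * M)) \<ge> 2 * (- (2 * M))"
      using m0ge M(1) by (intro mult_right_mono_neg) auto
    ultimately show ?thesis by linarith
  qed
  define P where "P \<mu> = 2 / s * (f1 (aa u \<xi> \<mu>) * ((1 + \<mu>) / 2) - f (aa u \<xi> \<mu>) / s)" for \<mu>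
  have ftc: "((\<lambda>\<mu>. f2 (aa u \<xi> \<mu>) * ((1 + \<mu>) / 2)) has_integral (P m0 - P (-1))) {-1..m0}"
  proof (rule fundamental_theorem_of_calculus[OF m0ge])
    fix x assume x: "x \<in> {-1..m0}"
    have a01: "aa u \<xi> x \<in> {0<..<1}" using aa_in01 x m0le u01 \<xi>01 by auto
    have da: "(aa u \<xi> has_real_derivative s / 2) (at x)"
      unfolding aa_def s_def by (auto intro!: derivative_eq_intros simp: field_simps)
    have d1': "((\<lambda>\<mu>. f1 (aa u \<xi> \<mu>)) has_real_derivative f2 (aa u \<xi> x) * (s / 2)) (at x)"
      using DERIV_chain2[OF d1[OF a01] da] .
    have d0': "((\<lambda>\<mu>. f (aa u \<xi> \<mu>)) has_real_derivative f1 (aa u \<xi> x) * (s / 2)) (at x)"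
      using DERIV_chain2[OF d0[OF a01] da] .
    have D1: "(P has_real_derivative
        2 / s * ((f2 (aa u \<xi> x) * (s / 2)) * ((1 + x) / 2) + f1 (aa u \<xi> x) * (1 / 2)
          - f1 (aa u \<xi> x) * (s / 2) / s)) (at x)"
      unfolding P_def[abs_def]
      by (rule DERIV_cmult, rule DERIV_diff, rule DERIV_mult'[OF d1', of _ "1/2", THEN DERIV_cong])
        (auto intro!: derivative_eq_intros d0' simp: field_simps)
    have E: "2 / s * ((f2 (aa u \<xi> x) * (s / 2)) * ((1 + x) / 2) + f1 (aa u \<xi> x) * (1 / 2)
          - f1 (aa u \<xi> x) * (s / 2) / s) = f2 (aa u \<xi> x) * ((1 + x) / 2)"
      using s by (simp add: field_simps)
    from D1 have "(P has_real_derivative f2 (aa u \<xi> x) * ((1 + x) / 2)) (at x)" unfolding E .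
    then show "(P has_vector_derivative f2 (aa u \<xi> x) * ((1 + x) / 2)) (at x within {-1..m0})"
      unfolding has_real_derivative_iff_has_vector_derivative[symmetric] by (rule has_field_derivative_at_within)
  qed
  define B0 where "B0 = f1 v0 * ((1 + m0) / 2) + (f u - f v0) / s"
  have PB: "P m0 - P (-1) = 2 / s * B0"
    unfolding P_def B0_def am0 aa_m1 using s by (simp add: field_simps)
  have p0: "0 \<le> (1 + m0) / 2" "(1 + m0) / 2 \<le> 1" using m0ge m0le by auto
  have B0T: "T \<le> B0"
  proof -
    have A: "f u - f v0 \<le> (f u - f v0) / s" using s T by (simp add: le_divide_eq mult_left_le)
    have "- \<bar>f1 v0\<bar> \<le> f1 v0 * ((1 + m0) / 2)"
    proof -
      have "\<bar>f1 v0 * ((1 + m0) / 2)\<bar> \<le> \<bar>f1 v0\<bar> * 1" using p0 unfolding abs_mult by (intro mult_left_mono) auto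
      then show ?thesis by linarith
    qed
    then show ?thesis using A T unfolding B0_def by linarith
  qed
  have B02: "2 * T \<le> 2 / s * B0"
  proof -
    have "2 * B0 \<le> 2 / s * B0" using s B0T T by (intro mult_right_mono) (auto simp: le_divide_eq)
    then show ?thesis using B0T by linarith
  qed
  have sqd: "sqrt d \<le> sqrt (1 - m0)"
  proof -
    have "1 - m0 = 2 * (\<xi> - v0) / s" unfolding m0_def s_def using ne by (simp add: field_simps)
    moreover have "2 * (\<xi> - v0) \<le> 2 * (\<xi> - v0) / s" using s v0 by (simp add: le_divide_eq mult_left_le)
    ultimately show ?thesis using d by simp
  qed
  have part1: "sqrt d * (2 * T) \<le> integral {-1..m0} F"
  proof -
    have "integral {-1..m0} (\<lambda>\<mu>. sqrt (1 - m0) * (f2 (aa u \<xi> \<mu>) * ((1 + \<mu>) / 2))) \<le> integral {-1..m0} F"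
    proof (rule integral_le)
      show "(\<lambda>\<mu>. sqrt (1 - m0) * (f2 (aa u \<xi> \<mu>) * ((1 + \<mu>) / 2))) integrable_on {-1..m0}"
        using integrable_on_cmult_left[OF has_integral_integrable[OF ftc], of "sqrt (1 - m0)"] by simp
      show "F integrable_on {-1..m0}" by (rule Fint) (use m0le in auto)
      fix \<mu> assume \<mu>: "\<mu> \<in> {-1..m0}"
      have "aa u \<xi> \<mu> \<in> {u..v0}"
        using aa_mono[of u \<xi> "-1" \<mu>] aa_mono[of u \<xi> \<mu> m0] \<mu> s am0 aa_m1 unfolding s_def by auto
      then have "0 < f2 (aa u \<xi> \<mu>)" using pos u by auto
      then have nn: "0 \<le> f2 (aa u \<xi> \<mu>) * ((1 + \<mu>) / 2)" using \<mu> by simp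
      have "sqrt (1 - m0) \<le> sqrt (1 - \<mu>)" using \<mu> by simp
      then have "sqrt (1 - m0) * (f2 (aa u \<xi> \<mu>) * ((1 + \<mu>) / 2))
          \<le> sqrt (1 - \<mu>) * (f2 (aa u \<xi> \<mu>) * ((1 + \<mu>) / 2))"
        using nn by (rule mult_right_mono)
      then show "sqrt (1 - m0) * (f2 (aa u \<xi> \<mu>) * ((1 + \<mu>) / 2)) \<le> F \<mu>"
        unfolding F_def by (simp add: mult_ac)
    qed
    also have "integral {-1..m0} (\<lambda>\<mu>. sqrt (1 - m0) * (f2 (aa u \<xi> \<mu>) * ((1 + \<mu>) / 2)))
        = sqrt (1 - m0) * (2 / s * B0)"
      using integral_unique[OF ftc] PB by simp
    finally have "sqrt (1 - m0) * (2 / s * B0) \<le> integral {-1..m0} F" .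
    moreover have "sqrt d * (2 * T) \<le> sqrt (1 - m0) * (2 / s * B0)"
      by (rule mult_mono[OF sqd B02]) (use T m0le in auto)
    ultimately show ?thesis by linarith
  qed
  show ?thesis using Ik_split part1 part2 by linarith
qed

end


definition c0 :: real where "c0 = 1 / (4 * sqrt 2)"

lemma c0_pos: "0 < c0" unfolding c0_def by simp

lemma V0_pos: "0 < \<xi> \<Longrightarrow> 0 < u \<Longrightarrow> 0 < V0 \<xi> u" unfolding V0_def by simp

context sf
begin

definition HH :: "real \<Rightarrow> real \<Rightarrow> real" where
  "HH u \<xi> = Ik f2 1 u \<xi> * V0 \<xi> u - Ik f1 0 u \<xi> * (4/15)"

lemma G0_eq: "G0 f \<xi> u = c0 * Ik f1 0 u \<xi>"
  unfolding G0_def Ik_def aa_def c0_def by simp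

lemma J0_eq: "J0 f u = (\<lambda>\<xi>. - (c0 * Ik f1 0 u \<xi>) / V0 \<xi> u)"
  unfolding J0_def[abs_def] G0_eq by simp

lemma I0_deriv: "u \<in> {0<..<1} \<Longrightarrow> \<xi> \<in> {0<..<1} \<Longrightarrow> (Ik f1 0 u has_real_derivative Ik f2 1 u \<xi>) (at \<xi>)"
  using Ik_deriv[OF d1 c2] by simp

lemma I1_deriv: "u \<in> {0<..<1} \<Longrightarrow> \<xi> \<in> {0<..<1} \<Longrightarrow> (Ik f2 1 u has_real_derivative Ik f3 2 u \<xi>) (at \<xi>)"
  using Ik_deriv[OF d2 c3, of u \<xi> 1] by (simp add: numeral_2_eq_2)

lemma J0_deriv:
  assumes u: "u \<in> {0<..<1}" and \<xi>: "\<xi> \<in> {0<..<1}"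
  shows "(J0 f u has_real_derivative - c0 * HH u \<xi> / (V0 \<xi> u)\<^sup>2) (at \<xi>)"
proof -
  have V: "V0 \<xi> u \<noteq> 0" using V0_pos u \<xi> by force
  have dV: "((\<lambda>\<xi>. V0 \<xi> u) has_real_derivative 4/15) (at \<xi>)"
    unfolding V0_def by (auto intro!: derivative_eq_intros)
  have dN: "((\<lambda>\<xi>. - (c0 * Ik f1 0 u \<xi>)) has_real_derivative - (c0 * Ik f2 1 u \<xi>)) (at \<xi>)"
    by (intro DERIV_minus DERIV_cmult I0_deriv u \<xi>)
  have "((\<lambda>\<xi>. - (c0 * Ik f1 0 u \<xi>) / V0 \<xi> u) has_real_derivative
      (- (c0 * Ik f2 1 u \<xi>) * V0 \<xi> u - - (c0 * Ik f1 0 u \<xi>) * (4/15)) / (V0 \<xi> u * V0 \<xi> u)) (at \<xi>)"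
    by (rule DERIV_divide[OF dN dV V])
  moreover have "(- (c0 * Ik f2 1 u \<xi>) * V0 \<xi> u - - (c0 * Ik f1 0 u \<xi>) * (4/15)) / (V0 \<xi> u * V0 \<xi> u)
      = - c0 * HH u \<xi> / (V0 \<xi> u)\<^sup>2"
    unfolding HH_def power2_eq_square by (simp add: algebra_simps)
  ultimately show ?thesis unfolding J0_eq by simp
qed

lemma HH_deriv:
  assumes u: "u \<in> {0<..<1}" and \<xi>: "\<xi> \<in> {0<..<1}"
  shows "(HH u has_real_derivative Ik f3 2 u \<xi> * V0 \<xi> u) (at \<xi>)"
proof -
  have dV: "((\<lambda>\<xi>. V0 \<xi> u) has_real_derivative 4/15) (at \<xi>)"
    unfolding V0_def by (auto intro!: derivative_eq_intros)
  have A: "((\<lambda>\<xi>. Ik f2 1 u \<xi> * V0 \<xi> u) has_real_derivative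
      Ik f3 2 u \<xi> * V0 \<xi> u + 4/15 * Ik f2 1 u \<xi>) (at \<xi>)"
    using DERIV_mult[OF I1_deriv[OF u \<xi>] dV] .
  have B: "((\<lambda>\<xi>. Ik f1 0 u \<xi> * (4/15)) has_real_derivative Ik f2 1 u \<xi> * (4/15)) (at \<xi>)"
    using DERIV_cmult_right[OF I0_deriv[OF u \<xi>]] .
  have "((\<lambda>\<xi>. Ik f2 1 u \<xi> * V0 \<xi> u - Ik f1 0 u \<xi> * (4/15)) has_real_derivative
      (Ik f3 2 u \<xi> * V0 \<xi> u + 4/15 * Ik f2 1 u \<xi>) - Ik f2 1 u \<xi> * (4/15)) (at \<xi>)"
    using DERIV_diff[OF A B] .
  then show ?thesis unfolding HH_def[abs_def] by simp
qed

lemma I0_neg: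
  assumes u: "u \<in> {0<..<1}" and \<xi>: "\<xi> \<in> {0<..<1}"
  shows "Ik f1 0 u \<xi> < 0"
proof -
  define S where "S = {min u \<xi>..max u \<xi>}"
  have S01: "S \<subseteq> {0<..<1}" using u \<xi> unfolding S_def by auto
  have mm: "min u \<xi> \<le> max u \<xi>" by (rule order_trans[OF min.cobounded1 max.cobounded1])
  have "\<exists>x\<in>S. \<forall>y\<in>S. f1 y \<le> f1 x"
    by (rule continuous_attains_sup) (use mm continuous_on_subset[OF c1 S01] in \<open>auto simp: S_def\<close>)
  then obtain a where a: "a \<in> S" "\<forall>y\<in>S. f1 y \<le> f1 a" by blast
  have fa: "f1 a < 0" using f1neg S01 a by auto
  define F where "F \<mu> = f1 (aa u \<xi> \<mu>) * ((1 + \<mu>) / 2) ^ 0 * sqrt (1 - \<mu>)" for \<mu>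
  have Fint: "F integrable_on {a'..b}" if "-1 \<le> a'" "b \<le> 1" for a' b
    unfolding F_def by (rule integrable_F[OF c1 u \<xi> that])
  have spl: "Ik f1 0 u \<xi> = integral {-1..0} F + integral {0..1} F"
    unfolding Ik_def F_def[symmetric]
    using Henstock_Kurzweil_Integration.integral_combine[of "-1" 0 1 F] Fint[of "-1" 1] by simp
  have p1: "integral {-1..0} F \<le> (0 - -1) * f1 a"
  proof (rule integral_le_const[OF Fint])
    fix \<mu> assume \<mu>: "\<mu> \<in> {-1..0::real}"
    have "aa u \<xi> \<mu> \<in> S" using aa_bounds[of \<mu> u \<xi>] \<mu> unfolding S_def by auto
    then have le: "f1 (aa u \<xi> \<mu>) \<le> f1 a" using a by auto
    have neg: "f1 (aa u \<xi> \<mu>) < 0" using le fa by linarith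
    have "1 \<le> sqrt (1 - \<mu>)" using \<mu> by simp
    then have "f1 (aa u \<xi> \<mu>) * sqrt (1 - \<mu>) \<le> f1 (aa u \<xi> \<mu>) * 1"
      using neg by (intro mult_left_mono_neg) auto
    then show "F \<mu> \<le> f1 a" unfolding F_def using le by simp
  qed auto
  have p2: "integral {0..1} F \<le> (1 - 0) * 0"
  proof (rule integral_le_const[OF Fint])
    fix \<mu> assume \<mu>: "\<mu> \<in> {0..1::real}"
    have "aa u \<xi> \<mu> \<in> {0<..<1}" using aa_in01 \<mu> u \<xi> by auto
    then have "f1 (aa u \<xi> \<mu>) < 0" by (rule f1neg)
    then show "F \<mu> \<le> 0" unfolding F_def using \<mu> by (simp add: mult_nonpos_nonneg)
  qed auto
  show ?thesis using spl p1 p2 fa by simp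
qed

lemma f3_upper:
  assumes "0 < e" "e < 1/2"
  shows "\<exists>M\<ge>0. \<forall>a\<in>{0<..1-e}. f3 a \<le> M"
proof -
  obtain d3 where d3: "d3 > 0" "\<forall>u\<in>{0<..<d3}. f3 u < 0" using f3_0 by blast
  define D where "D = min d3 (1 - e)"
  have D: "0 < D" "D \<le> 1 - e" using d3 assms by (auto simp: D_def)
  obtain M where M: "M \<ge> 0" "\<forall>x\<in>{D..1-e}. \<bar>f3 x\<bar> \<le> M"
    using cont_bound[of D "1 - e" f3] continuous_on_subset[OF c3, of "{D..1-e}"] D assms by force
  have "f3 a \<le> M" if a: "a \<in> {0<..1-e}" for a
  proof (cases "a < D")
    case True
    then have "f3 a < 0" using d3 a by (auto simp: D_def)
    then show ?thesis using M by linarith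
  next
    case False
    then have "\<bar>f3 a\<bar> \<le> M" using M a by auto
    then show ?thesis by linarith
  qed
  then show ?thesis using M by blast
qed

end


lemma q_le_abs: "0 \<le> (q::real) \<Longrightarrow> q \<le> 1 \<Longrightarrow> q * x \<le> \<bar>x\<bar>"
proof -
  assume q: "0 \<le> q" "q \<le> 1"
  have "q * x \<le> \<bar>q * x\<bar>" by simp
  also have "\<dots> = q * \<bar>x\<bar>" using q by (simp add: abs_mult)
  also have "\<dots> \<le> 1 * \<bar>x\<bar>" using q by (intro mult_right_mono) auto
  finally show ?thesis by simp
qed

context sf
begin

lemma C_setup:
  "\<exists>e t0. 0 < e \<and> e \<le> 1/8 \<and> (\<forall>x\<in>{1-2*e..<1}. f3 x < 0 \<and> f2 x < 0) \<and> 1 - e < t0 \<and> t0 < 1 \<and>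
     (\<forall>u \<xi>. 0 < u \<longrightarrow> u \<le> 1/4 \<longrightarrow> (1 + t0) / 2 \<le> \<xi> \<longrightarrow> \<xi> < 1 \<longrightarrow> Ik f3 2 u \<xi> < 0)"
proof -
  obtain e where e: "0 < e" "e \<le> 1/8" "\<forall>x\<in>{1-2*e..<1}. f3 x < 0 \<and> f2 x < 0" using near1 by blast
  obtain M3 where M3: "M3 \<ge> 0" "\<forall>a\<in>{0<..1-e}. f3 a \<le> M3" using f3_upper[of e] e by auto
  define K0 where "K0 = 16 * M3 + 4 * \<bar>f2 (1 - e)\<bar> + 4"
  obtain t0 where t0: "max (1 - e) 0 < t0" "t0 < 1" "K0 \<le> sqrt (1 - t0) * (- f2 t0)"
    using tail_f2[of "1 - e" K0] e by auto
  have "Ik f3 2 u \<xi> < 0" if u: "0 < u" "u \<le> 1/4" and \<xi>: "(1 + t0) / 2 \<le> \<xi>" "\<xi> < 1" for u \<xi>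
  proof -
    have "Ik f3 2 u \<xi> \<le> 4 * M3 + 1/4 * (sqrt (1 - t0) * (f2 t0 - f2 (1 - e)))"
    proof (rule upper_tail[OF d2 c3 u e(1,2)])
      show "1 - e < t0" "t0 < \<xi>" "\<xi> < 1" "1 - t0 \<le> 2 * (\<xi> - t0)" using t0 \<xi> by auto
      show "0 \<le> M3" by (rule M3(1))
      show "f3 a \<le> M3" if "a \<in> {u..1-e}" for a using M3(2) that u by auto
      show "f3 a \<le> 0" if "a \<in> {1-e..<1}" for a
      proof -
        have "a \<in> {1-2*e..<1}" using that e by auto
        then have "f3 a < 0" using e(3) by blast
        then show ?thesis by simp
      qed
    qed auto
    moreover have "sqrt (1 - t0) * (- f2 (1 - e)) \<le> \<bar>f2 (1 - e)\<bar>"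
      using q_le_abs[of "sqrt (1 - t0)" "- f2 (1 - e)"] t0 e by simp
    moreover have "sqrt (1 - t0) * (f2 t0 - f2 (1 - e)) = - (sqrt (1 - t0) * (- f2 t0)) + sqrt (1 - t0) * (- f2 (1 - e))"
      by (simp add: algebra_simps)
    ultimately show ?thesis using t0(3) M3(1) unfolding K0_def by linarith
  qed
  then show ?thesis using e t0 by (intro exI[of _ e] exI[of _ t0]) auto
qed

lemma I1_very_neg:
  assumes e: "0 < e" "e \<le> 1/8" "\<forall>x\<in>{1-2*e..<1}. f2 x < 0"
    and r: "r < 1" and u: "0 < u" "u \<le> 1/4"
  shows "\<exists>\<xi>. r < \<xi> \<and> \<xi> < 1 \<and> Ik f2 1 u \<xi> \<le> - N"
proof -
  obtain M where M: "M \<ge> 0" "\<forall>x\<in>{u..1-e}. \<bar>f2 x\<bar> \<le> M"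
    using cont_bound[of u "1 - e" f2] continuous_on_subset[OF c2, of "{u..1-e}"] u e by force
  define K1 where "K1 = 4 * (4 * M + \<bar>N\<bar>) + 4 * \<bar>f1 (1 - e)\<bar>"
  obtain t where t: "max (max r (1 - e)) 0 < t" "t < 1" "K1 \<le> sqrt (1 - t) * (- f1 t)"
    using tail_f1[of "max r (1 - e)" K1] r e by auto
  define \<xi> where "\<xi> = (1 + t) / 2"
  have \<xi>: "r < \<xi>" "\<xi> < 1" "t < \<xi>" using t by (auto simp: \<xi>_def)
  have "Ik f2 1 u \<xi> \<le> 4 * M + 1/4 * (sqrt (1 - t) * (f1 t - f1 (1 - e)))"
  proof (rule upper_tail[OF d1 c2 u e(1,2)])
    show "1 - e < t" "t < \<xi>" "\<xi> < 1" "1 - t \<le> 2 * (\<xi> - t)" using t \<xi> by (auto simp: \<xi>_def)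
    show "0 \<le> M" by (rule M(1))
    show "f2 a \<le> M" if "a \<in> {u..1-e}" for a using M(2) that by force
    show "f2 a \<le> 0" if "a \<in> {1-e..<1}" for a
    proof -
      have "a \<in> {1-2*e..<1}" using that e by auto
      then have "f2 a < 0" using e(3) by blast
      then show ?thesis by simp
    qed
  qed auto
  moreover have "sqrt (1 - t) * (- f1 (1 - e)) \<le> \<bar>f1 (1 - e)\<bar>"
    using q_le_abs[of "sqrt (1 - t)" "- f1 (1 - e)"] t e by simp
  moreover have "sqrt (1 - t) * (f1 t - f1 (1 - e)) = - (sqrt (1 - t) * (- f1 t)) + sqrt (1 - t) * (- f1 (1 - e))"
    by (simp add: algebra_simps)
  ultimately have "Ik f2 1 u \<xi> \<le> - N"
  proof -
    assume a1: "Ik f2 1 u \<xi> \<le> 4 * M + 1/4 * (sqrt (1 - t) * (f1 t - f1 (1 - e)))"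
      and a2: "sqrt (1 - t) * (- f1 (1 - e)) \<le> \<bar>f1 (1 - e)\<bar>"
      and a3: "sqrt (1 - t) * (f1 t - f1 (1 - e)) = - (sqrt (1 - t) * (- f1 t)) + sqrt (1 - t) * (- f1 (1 - e))"
    define A where "A = sqrt (1 - t) * (- f1 t)"
    define B where "B = sqrt (1 - t) * (- f1 (1 - e))"
    define X where "X = sqrt (1 - t) * (f1 t - f1 (1 - e))"
    have "X = - A + B" using a3 unfolding A_def B_def X_def .
    moreover have "Ik f2 1 u \<xi> \<le> 4 * M + 1/4 * X" using a1 unfolding X_def .
    moreover have "B \<le> \<bar>f1 (1 - e)\<bar>" using a2 unfolding B_def .
    moreover have "4 * (4 * M + \<bar>N\<bar>) + 4 * \<bar>f1 (1 - e)\<bar> \<le> A" using t(3) unfolding A_def K1_def .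
    moreover have "N \<le> \<bar>N\<bar>" "0 \<le> \<bar>f1 (1 - e)\<bar>" by auto
    ultimately show ?thesis
      by (simp add: field_simps)
  qed
  then show ?thesis using \<xi> by blast
qed

lemma AB:
  assumes \<beta>: "\<beta> < 1"
  shows "\<exists>\<delta>>0. \<delta> \<le> 1/4 \<and> (\<forall>u\<in>{0<..<\<delta>}. \<forall>\<xi>\<in>{0<..\<beta>}. 0 \<le> Ik f2 1 u \<xi>)"
proof -
  obtain d1 where d1: "d1 > 0" "d1 < 1" "\<forall>x\<in>{0<..d1}. 0 < f2 x" using f2pos by blast
  define \<beta>' where "\<beta>' = max \<beta> ((1 + d1) / 2)"
  have "d1 < (1 + d1) / 2" using d1 by simp
  then have \<beta>': "\<beta> \<le> \<beta>'" "\<beta>' < 1" "d1 < \<beta>'" using \<beta> d1 by (auto simp: \<beta>'_def less_max_iff_disj)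
  define v0 where "v0 = d1 / 2"
  have v0: "0 < v0" "v0 < d1" using d1 by (auto simp: v0_def)
  obtain M where M: "M \<ge> 0" "\<forall>x\<in>{v0..\<beta>'}. \<bar>f2 x\<bar> \<le> M"
    using cont_bound[of v0 \<beta>' f2] continuous_on_subset[OF c2, of "{v0..\<beta>'}"] v0 \<beta>' by force
  define T where "T = 2 * M / sqrt d1"
  have T0: "0 \<le> T" using M d1 by (simp add: T_def)
  have "eventually (\<lambda>x. f v0 + \<bar>f1 v0\<bar> + T \<le> f x) (at_right 0)" using lim0 by (simp add: filterlim_at_top)
  then obtain b where b: "b > 0" "\<forall>y>0. y < b \<longrightarrow> f v0 + \<bar>f1 v0\<bar> + T \<le> f y"
    unfolding eventually_at_right_field by auto
  define \<delta> where "\<delta> = min b (min v0 (1/4))"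
  have \<delta>: "0 < \<delta>" "\<delta> \<le> 1/4" "\<delta> \<le> b" "\<delta> \<le> v0" using b v0 by (auto simp: \<delta>_def)
  have "0 \<le> Ik f2 1 u \<xi>" if u: "u \<in> {0<..<\<delta>}" and \<xi>: "\<xi> \<in> {0<..\<beta>}" for u \<xi>
  proof (cases "\<xi> \<le> d1")
    case True
    have u01: "u \<in> {0<..<1}" and \<xi>01: "\<xi> \<in> {0<..<1}" using u \<xi> \<delta> \<beta> by auto
    show ?thesis unfolding Ik_def
    proof (rule integral_nonneg)
      show "(\<lambda>\<mu>. f2 (aa u \<xi> \<mu>) * ((1 + \<mu>) / 2) ^ 1 * sqrt (1 - \<mu>)) integrable_on {-1..1}"
        by (rule integrable_F[OF c2 u01 \<xi>01]) auto
      fix \<mu> :: real assume \<mu>: "\<mu> \<in> {-1..1}"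
      have "aa u \<xi> \<mu> \<in> {0<..d1}" using aa_bounds[OF \<mu>, of u \<xi>] u \<xi> True \<delta> v0 by auto
      then have "0 < f2 (aa u \<xi> \<mu>)" using d1 by auto
      then show "0 \<le> f2 (aa u \<xi> \<mu>) * ((1 + \<mu>) / 2) ^ 1 * sqrt (1 - \<mu>)" using \<mu> by simp
    qed
  next
    case False
    have "- 4 * M + sqrt d1 * (2 * T) \<le> Ik f2 1 u \<xi>"
    proof (rule regionB)
      show "0 < u" "u < v0" "v0 < \<xi>" "\<xi> < 1" using u \<xi> \<delta> False v0 \<beta> by auto
      show "0 < f2 x" if "x \<in> {0<..v0}" for x using d1 that v0 by auto
      show "0 \<le> M" by (rule M(1))
      show "\<bar>f2 x\<bar> \<le> M" if "x \<in> {v0..\<xi>}" for x using M(2) that \<xi> \<beta>' by auto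
      show "0 < d1" by (rule d1(1))
      show "d1 \<le> 2 * (\<xi> - v0)" using False by (simp add: v0_def)
      show "0 \<le> T" by (rule T0)
      show "T \<le> f u - f v0 - \<bar>f1 v0\<bar>" using b(2) u \<delta> by force
    qed
    moreover have "sqrt d1 * (2 * T) = 4 * M" using d1 by (simp add: T_def)
    ultimately show ?thesis by simp
  qed
  then show ?thesis using \<delta> by blast
qed

end


context sf
begin

lemma HH_pos_of:
  assumes u: "u \<in> {0<..<1}" and \<xi>: "\<xi> \<in> {0<..<1}" and I1: "0 \<le> Ik f2 1 u \<xi>"
  shows "0 < HH u \<xi>"
proof -
  have "0 < V0 \<xi> u" using V0_pos u \<xi> by auto
  then have "0 \<le> Ik f2 1 u \<xi> * V0 \<xi> u" using I1 by simp
  moreover have "Ik f1 0 u \<xi> < 0" by (rule I0_neg[OF u \<xi>])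
  ultimately show ?thesis unfolding HH_def by simp
qed

lemma HH_cont: "u \<in> {0<..<1} \<Longrightarrow> continuous_on {0<..<1} (HH u)"
  using HH_deriv by (meson DERIV_continuous continuous_at_imp_continuous_on)

lemma per_u:
  assumes u: "0 < u" "u \<le> 1/4" and \<xi>0: "0 < \<xi>0" "\<xi>0 < 1"
    and pos: "\<forall>\<xi>\<in>{0<..\<xi>0}. 0 < HH u \<xi>"
    and dec: "\<forall>\<xi>\<in>{\<xi>0..<1}. Ik f3 2 u \<xi> < 0"
    and vn: "\<And>N r. r < 1 \<Longrightarrow> \<exists>\<xi>. r < \<xi> \<and> \<xi> < 1 \<and> Ik f2 1 u \<xi> \<le> - N"
  shows "\<exists>\<xi>c\<in>{\<xi>0<..<1}. HH u \<xi>c = 0 \<and> (\<forall>\<xi>\<in>{0<..<1}. HH u \<xi> = 0 \<longrightarrow> \<xi> = \<xi>c)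
    \<and> (\<forall>\<xi>\<in>{0<..<\<xi>c}. 0 < HH u \<xi>) \<and> (\<forall>\<xi>\<in>{\<xi>c<..<1}. HH u \<xi> < 0)"
proof -
  have u01: "u \<in> {0<..<1}" using u by auto
  have HHdec: "HH u b < HH u a" if ab: "\<xi>0 \<le> a" "a < b" "b < 1" for a b
  proof (rule DERIV_neg_imp_decreasing[OF ab(2)])
    fix x assume x: "a \<le> x" "x \<le> b"
    have x01: "x \<in> {0<..<1}" using x ab \<xi>0 by auto
    have "Ik f3 2 u x < 0" using dec x ab by auto
    moreover have "0 < V0 x u" using V0_pos x01 u by auto
    ultimately have "Ik f3 2 u x * V0 x u < 0" by (simp add: mult_neg_pos)
    then show "\<exists>y. (HH u has_real_derivative y) (at x) \<and> y < 0" using HH_deriv[OF u01 x01] by blast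
  qed
  have HH0: "0 < HH u \<xi>0" using pos \<xi>0 by auto
  have "\<exists>\<xi>1. \<xi>0 < \<xi>1 \<and> \<xi>1 < 1 \<and> HH u \<xi>1 < 0"
  proof (rule ccontr)
    assume N: "\<not> ?thesis"
    have Hnn: "0 \<le> HH u x" if "x \<in> {\<xi>0..<1}" for x
    proof (cases "x = \<xi>0")
      case True then show ?thesis using HH0 by simp
    next
      case False then show ?thesis using N that by force
    qed
    define Jm where "Jm = J0 f u \<xi>0"
    have Jle: "J0 f u \<xi> \<le> Jm" if \<xi>: "\<xi> \<in> {\<xi>0..<1}" for \<xi>
      unfolding Jm_def
    proof (rule DERIV_nonpos_imp_nonincreasing[of \<xi>0 \<xi> "J0 f u"])
      show "\<xi>0 \<le> \<xi>" using \<xi> by auto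
      fix x assume x: "\<xi>0 \<le> x" "x \<le> \<xi>"
      have x01: "x \<in> {0<..<1}" using x \<xi> \<xi>0 by auto
      have "0 \<le> HH u x" using Hnn x \<xi> by auto
      then have "- c0 * HH u x / (V0 x u)\<^sup>2 \<le> 0" using c0_pos by (simp add: divide_nonpos_nonneg)
      then show "\<exists>y. (J0 f u has_real_derivative y) (at x) \<and> y \<le> 0" using J0_deriv[OF u01 x01] by blast
    qed
    have V0b: "V0 \<xi> u \<le> 1" "V0 \<xi>0 u \<le> V0 \<xi> u" if "\<xi> \<in> {\<xi>0..<1}" for \<xi>
      using that u unfolding V0_def by auto
    have V00: "0 < V0 \<xi>0 u" using V0_pos \<xi>0 u by auto
    have Jm0: "0 \<le> Jm"
    proof -
      have a: "c0 * Ik f1 0 u \<xi>0 < 0" using I0_neg[OF u01, of \<xi>0] \<xi>0 c0_pos by (simp add: mult_pos_neg)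
      have "c0 * Ik f1 0 u \<xi>0 / V0 \<xi>0 u < 0" using a V00 by (rule divide_neg_pos)
      then show ?thesis unfolding Jm_def J0_eq by simp
    qed
    have I0b: "- Ik f1 0 u \<xi> \<le> Jm / c0" if \<xi>: "\<xi> \<in> {\<xi>0..<1}" for \<xi>
    proof -
      have V: "0 < V0 \<xi> u" using V0_pos \<xi> \<xi>0 u by auto
      have "- (c0 * Ik f1 0 u \<xi>) / V0 \<xi> u \<le> Jm" using Jle[OF \<xi>] unfolding J0_eq by simp
      then have "- (c0 * Ik f1 0 u \<xi>) \<le> Jm * V0 \<xi> u" using V by (metis pos_divide_le_eq minus_divide_left)
      also have "\<dots> \<le> Jm * 1" using V0b[OF \<xi>] Jm0 by (intro mult_left_mono) auto
      finally have "c0 * (- Ik f1 0 u \<xi>) \<le> Jm" by simp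
      then show ?thesis using c0_pos by (simp add: le_divide_eq mult.commute)
    qed
    define NN where "NN = (4/15 * (Jm / c0) + 1) / V0 \<xi>0 u"
    have "0 \<le> 4/15 * (Jm / c0)" using Jm0 c0_pos by simp
    then have NN0: "0 < NN" unfolding NN_def using V00 by (intro divide_pos_pos) auto
    obtain \<xi> where \<xi>: "\<xi>0 < \<xi>" "\<xi> < 1" "Ik f2 1 u \<xi> \<le> - NN" using vn[OF \<xi>0(2)] by blast
    have \<xi>': "\<xi> \<in> {\<xi>0..<1}" using \<xi> by auto
    have "Ik f2 1 u \<xi> * V0 \<xi> u \<le> - NN * V0 \<xi> u"
      using \<xi>(3) V0_pos[of \<xi> u] \<xi> \<xi>0 u by (intro mult_right_mono) auto
    also have "\<dots> \<le> - NN * V0 \<xi>0 u" using V0b[OF \<xi>'] NN0 by simp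
    also have "\<dots> = - (4/15 * (Jm / c0) + 1)" unfolding NN_def using V00 by simp
    finally have "Ik f2 1 u \<xi> * V0 \<xi> u \<le> - (4/15 * (Jm / c0) + 1)" .
    moreover have "- Ik f1 0 u \<xi> * (4/15) \<le> 4/15 * (Jm / c0)" using I0b[OF \<xi>'] by simp
    ultimately have "HH u \<xi> < 0" unfolding HH_def by linarith
    then show False using N \<xi> by blast
  qed
  then obtain \<xi>1 where \<xi>1: "\<xi>0 < \<xi>1" "\<xi>1 < 1" "HH u \<xi>1 < 0" by blast
  have "\<exists>x. \<xi>0 \<le> x \<and> x \<le> \<xi>1 \<and> HH u x = 0"
  proof (rule IVT2')
    show "HH u \<xi>1 \<le> 0" "0 \<le> HH u \<xi>0" "\<xi>0 \<le> \<xi>1" using \<xi>1 HH0 by auto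
    show "continuous_on {\<xi>0..\<xi>1} (HH u)"
      by (rule continuous_on_subset[OF HH_cont[OF u01]]) (use \<xi>0 \<xi>1 in auto)
  qed
  then obtain \<xi>c where \<xi>c: "\<xi>0 \<le> \<xi>c" "\<xi>c \<le> \<xi>1" "HH u \<xi>c = 0" by blast
  have \<xi>c0: "\<xi>0 < \<xi>c" using \<xi>c HH0 by (cases "\<xi>c = \<xi>0") auto
  have \<xi>c1: "\<xi>c < 1" using \<xi>c \<xi>1 by auto
  have posb: "0 < HH u \<xi>" if "\<xi> \<in> {0<..<\<xi>c}" for \<xi>
  proof (cases "\<xi> \<le> \<xi>0")
    case True then show ?thesis using pos that by auto
  next
    case False then show ?thesis using HHdec[of \<xi> \<xi>c] that \<xi>c \<xi>c1 by auto
  qed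
  have negb: "HH u \<xi> < 0" if "\<xi> \<in> {\<xi>c<..<1}" for \<xi>
    using HHdec[of \<xi>c \<xi>] that \<xi>c \<xi>c0 by auto
  have uniq: "\<xi> = \<xi>c" if "\<xi> \<in> {0<..<1}" "HH u \<xi> = 0" for \<xi>
  proof -
    have "\<not> \<xi> < \<xi>c" using posb[of \<xi>] that by auto
    moreover have "\<not> \<xi>c < \<xi>" using negb[of \<xi>] that by auto
    ultimately show ?thesis by simp
  qed
  show ?thesis using \<xi>c0 \<xi>c1 \<xi>c(3) uniq posb negb by (intro bexI[of _ \<xi>c]) auto
qed

lemma from_HH:
  assumes u: "u \<in> {0<..<1}" and \<xi>c: "\<xi>c \<in> {0<..<1}" "HH u \<xi>c = 0"
    and uniq: "\<forall>\<xi>\<in>{0<..<1}. HH u \<xi> = 0 \<longrightarrow> \<xi> = \<xi>c"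
    and posb: "\<forall>\<xi>\<in>{0<..<\<xi>c}. 0 < HH u \<xi>" and negb: "\<forall>\<xi>\<in>{\<xi>c<..<1}. HH u \<xi> < 0"
  shows "(J0 f u has_real_derivative 0) (at \<xi>c)
      \<and> (\<forall>\<xi>\<in>{0<..<1}. (J0 f u has_real_derivative 0) (at \<xi>) \<longrightarrow> \<xi> = \<xi>c)
      \<and> (\<forall>\<eta>\<in>{0<..<1}. J0 f u \<xi>c \<le> J0 f u \<eta>)
      \<and> (\<forall>\<xi>\<in>{0<..<1}. (\<forall>\<eta>\<in>{0<..<1}. J0 f u \<xi> \<le> J0 f u \<eta>) \<longrightarrow> \<xi> = \<xi>c)"
proof (intro conjI ballI impI)
  show "(J0 f u has_real_derivative 0) (at \<xi>c)" using J0_deriv[OF u \<xi>c(1)] \<xi>c(2) by simp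
next
  fix \<xi> :: real assume \<xi>: "\<xi> \<in> {0<..<1}" and D: "(J0 f u has_real_derivative 0) (at \<xi>)"
  have "- c0 * HH u \<xi> / (V0 \<xi> u)\<^sup>2 = 0" using DERIV_unique[OF J0_deriv[OF u \<xi>] D] .
  moreover have "0 < V0 \<xi> u" using V0_pos \<xi> u by auto
  ultimately have "HH u \<xi> = 0" using c0_pos by simp
  then show "\<xi> = \<xi>c" using uniq \<xi> by blast
next
  fix \<eta> :: real assume \<eta>: "\<eta> \<in> {0<..<1}"
  show "J0 f u \<xi>c \<le> J0 f u \<eta>"
  proof (cases "\<eta> \<le> \<xi>c")
    case True
    show ?thesis
    proof (rule DERIV_nonpos_imp_nonincreasing[of \<eta> \<xi>c "J0 f u"])
      show "\<eta> \<le> \<xi>c" by (rule True)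
      fix x assume x: "\<eta> \<le> x" "x \<le> \<xi>c"
      have x01: "x \<in> {0<..<1}" using x \<eta> \<xi>c by auto
      have "0 \<le> HH u x" using posb x \<xi>c(2) x01 by (cases "x = \<xi>c") (auto simp: less_imp_le)
      then have "- c0 * HH u x / (V0 x u)\<^sup>2 \<le> 0" using c0_pos by (simp add: divide_nonpos_nonneg)
      then show "\<exists>y. (J0 f u has_real_derivative y) (at x) \<and> y \<le> 0" using J0_deriv[OF u x01] by blast
    qed
  next
    case False
    show ?thesis
    proof (rule DERIV_nonneg_imp_nondecreasing[of \<xi>c \<eta> "J0 f u"])
      show "\<xi>c \<le> \<eta>" using False by simp
      fix x assume x: "\<xi>c \<le> x" "x \<le> \<eta>"
      have x01: "x \<in> {0<..<1}" using x \<eta> \<xi>c by auto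
      have "HH u x \<le> 0" using negb x \<xi>c(2) x01 by (cases "x = \<xi>c") (auto simp: less_imp_le)
      then have "0 \<le> - c0 * HH u x / (V0 x u)\<^sup>2" using c0_pos
        by (intro divide_nonneg_nonneg) (auto simp: mult_nonneg_nonpos less_imp_le)
      then show "\<exists>y. (J0 f u has_real_derivative y) (at x) \<and> 0 \<le> y" using J0_deriv[OF u x01] by blast
    qed
  qed
next
  fix \<xi> :: real assume \<xi>: "\<xi> \<in> {0<..<1}" and m: "\<forall>\<eta>\<in>{0<..<1}. J0 f u \<xi> \<le> J0 f u \<eta>"
  have "- c0 * HH u \<xi> / (V0 \<xi> u)\<^sup>2 = 0"
  proof (rule DERIV_local_min[OF J0_deriv[OF u \<xi>]])
    show "0 < min \<xi> (1 - \<xi>)" using \<xi> by auto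
    show "\<forall>y. \<bar>\<xi> - y\<bar> < min \<xi> (1 - \<xi>) \<longrightarrow> J0 f u \<xi> \<le> J0 f u y"
    proof (intro allI impI)
      fix y assume "\<bar>\<xi> - y\<bar> < min \<xi> (1 - \<xi>)"
      then have "y \<in> {0<..<1}" by (auto simp: abs_less_iff)
      then show "J0 f u \<xi> \<le> J0 f u y" using m by blast
    qed
  qed
  moreover have "0 < V0 \<xi> u" using V0_pos \<xi> u by auto
  ultimately have "HH u \<xi> = 0" using c0_pos by simp
  then show "\<xi> = \<xi>c" using uniq \<xi> by blast
qed

end


context sf
begin

lemma main:
  "\<exists>\<delta>>0. \<exists>\<xi>c :: real \<Rightarrow> real.
     (\<forall>u3\<in>{0<..<\<delta>}.
        \<xi>c u3 \<in> {0<..<1}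
      \<and> (J0 f u3 has_real_derivative 0) (at (\<xi>c u3))
      \<and> (\<forall>\<xi>\<in>{0<..<1}. (J0 f u3 has_real_derivative 0) (at \<xi>) \<longrightarrow> \<xi> = \<xi>c u3)
      \<and> (\<forall>\<eta>\<in>{0<..<1}. J0 f u3 (\<xi>c u3) \<le> J0 f u3 \<eta>)
      \<and> (\<forall>\<xi>\<in>{0<..<1}. (\<forall>\<eta>\<in>{0<..<1}. J0 f u3 \<xi> \<le> J0 f u3 \<eta>) \<longrightarrow> \<xi> = \<xi>c u3))
   \<and> (\<xi>c \<longlongrightarrow> 1) (at_right 0)"
proof -
  obtain e t0 where e: "0 < e" "e \<le> 1/8" "\<forall>x\<in>{1-2*e..<1}. f3 x < 0 \<and> f2 x < 0"
    and t0: "1 - e < t0" "t0 < 1"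
    and I2n: "\<forall>u \<xi>. 0 < u \<longrightarrow> u \<le> 1/4 \<longrightarrow> (1 + t0) / 2 \<le> \<xi> \<longrightarrow> \<xi> < 1 \<longrightarrow> Ik f3 2 u \<xi> < 0"
    using C_setup by blast
  define \<xi>0 where "\<xi>0 = (1 + t0) / 2"
  have \<xi>0: "0 < \<xi>0" "\<xi>0 < 1" using t0 e by (auto simp: \<xi>0_def)
  have e2: "\<forall>x\<in>{1-2*e..<1}. f2 x < 0" using e(3) by blast
  obtain \<delta> where \<delta>: "\<delta> > 0" "\<delta> \<le> 1/4" "\<forall>u\<in>{0<..<\<delta>}. \<forall>\<xi>\<in>{0<..\<xi>0}. 0 \<le> Ik f2 1 u \<xi>"
    using AB[OF \<xi>0(2)] by blast
  define Q where "Q u \<xi>c \<longleftrightarrow> \<xi>c \<in> {\<xi>0<..<1} \<and> HH u \<xi>c = 0 \<and> (\<forall>\<xi>\<in>{0<..<1}. HH u \<xi> = 0 \<longrightarrow> \<xi> = \<xi>c)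
    \<and> (\<forall>\<xi>\<in>{0<..<\<xi>c}. 0 < HH u \<xi>) \<and> (\<forall>\<xi>\<in>{\<xi>c<..<1}. HH u \<xi> < 0)" for u \<xi>c
  have exQ: "\<exists>\<xi>c. Q u \<xi>c" if u: "u \<in> {0<..<\<delta>}" for u
  proof -
    have u01: "u \<in> {0<..<1}" using u \<delta> by auto
    have "\<exists>\<xi>c\<in>{\<xi>0<..<1}. HH u \<xi>c = 0 \<and> (\<forall>\<xi>\<in>{0<..<1}. HH u \<xi> = 0 \<longrightarrow> \<xi> = \<xi>c)
      \<and> (\<forall>\<xi>\<in>{0<..<\<xi>c}. 0 < HH u \<xi>) \<and> (\<forall>\<xi>\<in>{\<xi>c<..<1}. HH u \<xi> < 0)"
    proof (rule per_u)
      show "0 < u" "u \<le> 1/4" using u \<delta> by auto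
      show "0 < \<xi>0" "\<xi>0 < 1" using \<xi>0 by auto
      show "\<forall>\<xi>\<in>{0<..\<xi>0}. 0 < HH u \<xi>"
      proof
        fix \<xi> assume \<xi>: "\<xi> \<in> {0<..\<xi>0}"
        then have "\<xi> \<in> {0<..<1}" using \<xi>0 by auto
        then show "0 < HH u \<xi>" using HH_pos_of[OF u01] \<delta>(3) u \<xi> by blast
      qed
      show "\<forall>\<xi>\<in>{\<xi>0..<1}. Ik f3 2 u \<xi> < 0" using I2n u \<delta> unfolding \<xi>0_def by auto
      show "\<exists>\<xi>. r < \<xi> \<and> \<xi> < 1 \<and> Ik f2 1 u \<xi> \<le> - N" if "r < 1" for N r
        using I1_very_neg[OF e(1,2) e2 that] u \<delta> by auto
    qed
    then show ?thesis unfolding Q_def by blast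
  qed
  define \<xi>c where "\<xi>c u = (SOME \<xi>. Q u \<xi>)" for u
  have Qc: "Q u (\<xi>c u)" if "u \<in> {0<..<\<delta>}" for u
    unfolding \<xi>c_def using someI_ex[OF exQ[OF that]] .
  have part1: "\<xi>c u3 \<in> {0<..<1}
      \<and> (J0 f u3 has_real_derivative 0) (at (\<xi>c u3))
      \<and> (\<forall>\<xi>\<in>{0<..<1}. (J0 f u3 has_real_derivative 0) (at \<xi>) \<longrightarrow> \<xi> = \<xi>c u3)
      \<and> (\<forall>\<eta>\<in>{0<..<1}. J0 f u3 (\<xi>c u3) \<le> J0 f u3 \<eta>)
      \<and> (\<forall>\<xi>\<in>{0<..<1}. (\<forall>\<eta>\<in>{0<..<1}. J0 f u3 \<xi> \<le> J0 f u3 \<eta>) \<longrightarrow> \<xi> = \<xi>c u3)"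
    if u: "u3 \<in> {0<..<\<delta>}" for u3
  proof -
    have Q: "Q u3 (\<xi>c u3)" by (rule Qc[OF u])
    have u01: "u3 \<in> {0<..<1}" using u \<delta> by auto
    have c01: "\<xi>c u3 \<in> {0<..<1}" using Q \<xi>0 unfolding Q_def by auto
    show ?thesis using c01 from_HH[OF u01 c01] Q unfolding Q_def by blast
  qed
  have lim: "(\<xi>c \<longlongrightarrow> 1) (at_right 0)"
    unfolding tendsto_iff
  proof (intro allI impI)
    fix \<epsilon> :: real assume \<epsilon>: "0 < \<epsilon>"
    define \<beta> where "\<beta> = max \<xi>0 (1 - \<epsilon>/2)"
    have \<beta>: "\<beta> < 1" "1 - \<epsilon>/2 \<le> \<beta>" "\<xi>0 \<le> \<beta>" using \<epsilon> \<xi>0 by (auto simp: \<beta>_def)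
    obtain \<delta>\<beta> where \<delta>\<beta>: "\<delta>\<beta> > 0" "\<delta>\<beta> \<le> 1/4" "\<forall>u\<in>{0<..<\<delta>\<beta>}. \<forall>\<xi>\<in>{0<..\<beta>}. 0 \<le> Ik f2 1 u \<xi>"
      using AB[OF \<beta>(1)] by blast
    have "dist (\<xi>c y) 1 < \<epsilon>" if y: "0 < y" "y < min \<delta> \<delta>\<beta>" for y
    proof -
      have yd: "y \<in> {0<..<\<delta>}" using y by auto
      have y01: "y \<in> {0<..<1}" using y \<delta> by auto
      have Q: "Q y (\<xi>c y)" by (rule Qc[OF yd])
      then have c: "\<xi>c y \<in> {\<xi>0<..<1}" "HH y (\<xi>c y) = 0" unfolding Q_def by auto
      have "\<beta> < \<xi>c y"
      proof (rule ccontr)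
        assume "\<not> \<beta> < \<xi>c y"
        then have "\<xi>c y \<in> {0<..\<beta>}" using c \<xi>0 by auto
        then have "0 \<le> Ik f2 1 y (\<xi>c y)" using \<delta>\<beta>(3) y by auto
        moreover have "\<xi>c y \<in> {0<..<1}" using c \<xi>0 by auto
        ultimately have "0 < HH y (\<xi>c y)" using HH_pos_of[OF y01] by blast
        then show False using c by simp
      qed
      then show ?thesis using c \<beta> \<epsilon> by (simp add: dist_real_def)
    qed
    then show "eventually (\<lambda>u. dist (\<xi>c u) 1 < \<epsilon>) (at_right 0)"
      unfolding eventually_at_right_field using \<delta> \<delta>\<beta> by (intro exI[of _ "min \<delta> \<delta>\<beta>"]) auto
  qed
  show ?thesis using part1 lim \<delta> by blast
qed

end

theorem lemma4p7:
  fixes f :: "real \<Rightarrow> real"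
  assumes "standing_f f"
  shows "\<exists>\<delta>>0. \<exists>\<xi>c :: real \<Rightarrow> real.
     (\<forall>u3\<in>{0<..<\<delta>}.
        \<xi>c u3 \<in> {0<..<1}
      \<and> (J0 f u3 has_real_derivative 0) (at (\<xi>c u3))
      \<and> (\<forall>\<xi>\<in>{0<..<1}. (J0 f u3 has_real_derivative 0) (at \<xi>) \<longrightarrow> \<xi> = \<xi>c u3)
      \<and> (\<forall>\<eta>\<in>{0<..<1}. J0 f u3 (\<xi>c u3) \<le> J0 f u3 \<eta>)
      \<and> (\<forall>\<xi>\<in>{0<..<1}. (\<forall>\<eta>\<in>{0<..<1}. J0 f u3 \<xi> \<le> J0 f u3 \<eta>) \<longrightarrow> \<xi> = \<xi>c u3))
   \<and> (\<xi>c \<longlongrightarrow> 1) (at_right 0)"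
proof -
  interpret sf f by (unfold_locales) (rule assms)
  show ?thesis by (rule main)
qed

end
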